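(* Let $\Lambda$ and $\Lambda'$ be two lattices in $\mathbb{C}$ with $\Lambda'\subset\Lambda$. Then every weakly bialgebraic set for $\mathcal{P}_{\Lambda'}$ is weakly bialgebraic for $\mathcal{P}_{\Lambda}$.
   Context: Identify $\mathbb{R}^2$ with $\mathbb{C}$ via $(x,y)\mapsto x+iy$. For a lattice $\Lambda\subset\mathbb{C}$ let $\wp_\Lambda$ be its Weierstrass $\wp$-function and $\mathcal{P}_\Lambda:\mathbb{R}^2\smallsetminus\Lambda\to\mathbb{R}^2$, $(x,y)\mapsto(\mathrm{Re}\,\wp_\Lambda(x+iy),\mathrm{Im}\,\wp_\Lambda(x+iy))$. A non-empty subset $\mathcal{V}\subsetneq\mathbb{R}^2$ is called weakly bialgebraic for $\mathcal{P}_\Lambda$ if (i) there exist algebraic subvarieties $V\subset\mathbb{A}^2_\mathbb{R}$ and $W\subsetneq\mathbb{A}^2_\mathbb{R}$ with $\mathcal{V}=V(\mathbb{R})$ and $\mathcal{P}_\Lambda(\mathcal{V}\cap(\mathbb{R}^2\smallsetminus\Lambda))\subset W(\mathbb{R})$; and (ii) $\mathcal{V}$ cannot be written as $V_1(\mathbb{R})\cup V_2(\mathbb{R})$ with $V_1,V_2\subset\mathbb{A}^2_\mathbb{R}$ algebraic subvarieties and both inclusions $V_i(\mathbb{R})\subset\mathcal{V}$ proper. *)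

theory Defs
  imports "HOL-Analysis.Analysis" "HOL-Computational_Algebra.Polynomial"
begin

definition is_lattice :: "complex set \<Rightarrow> bool" where
  "is_lattice L \<longleftrightarrow> (\<exists>w1 w2. w1 \<noteq> 0 \<and> Im (w2 / w1) \<noteq> 0 \<and>
      L = {of_int m * w1 + of_int n * w2 | m n :: int. True})"

text \<open>Weierstrass p-function: 1/z^2 + sum over nonzero lattice points of
  (1/(z-w)^2 - 1/w^2); the series converges absolutely, so the unconditional
  sum infsum is the usual value.\<close>
definition wp :: "complex set \<Rightarrow> complex \<Rightarrow> complex" where
  "wp L z = 1 / z\<^sup>2 + (\<Sum>\<^sub>\<infinity>w\<in>L - {0}. 1 / (z - w)\<^sup>2 - 1 / w\<^sup>2)"

definition PL :: "complex set \<Rightarrow> real \<times> real \<Rightarrow> real \<times> real" where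
  "PL L p = (Re (wp L (Complex (fst p) (snd p))), Im (wp L (Complex (fst p) (snd p))))"

definition lattice_pts :: "complex set \<Rightarrow> (real \<times> real) set" where
  "lattice_pts L = {p. Complex (fst p) (snd p) \<in> L}"

text \<open>Bivariate real polynomials R[x][y] represented as real poly poly
  (outer variable y, coefficients polynomials in x).\<close>
definition eval2 :: "real poly poly \<Rightarrow> real \<times> real \<Rightarrow> real" where
  "eval2 p q = poly (map_poly (\<lambda>c. poly c (fst q)) p) (snd q)"

definition zero_set :: "real poly poly set \<Rightarrow> (real \<times> real) set" where
  "zero_set F = {q. \<forall>p\<in>F. eval2 p q = 0}"

text \<open>Weakly bialgebraic sets. The subvariety W is proper (W \<noteq> A^2) iff its
  defining ideal is nonzero, i.e. some defining polynomial is nonzero.\<close>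
definition weakly_bialgebraic :: "complex set \<Rightarrow> (real \<times> real) set \<Rightarrow> bool" where
  "weakly_bialgebraic L S \<longleftrightarrow>
     S \<noteq> {} \<and> S \<noteq> UNIV \<and>
     (\<exists>F G. finite F \<and> finite G \<and> S = zero_set F \<and> (\<exists>g\<in>G. g \<noteq> 0) \<and>
        PL L ` (S - lattice_pts L) \<subseteq> zero_set G) \<and>
     \<not> (\<exists>F1 F2. finite F1 \<and> finite F2 \<and> zero_set F1 \<subset> S \<and> zero_set F2 \<subset> S \<and>
            S = zero_set F1 \<union> zero_set F2)"

end

theory Submission
  imports Defs "HOL-Complex_Analysis.Complex_Analysis"
begin

lemma pw_ineq:
  fixes N P c :: real
  assumes "N > 0" "P > 0" "c > 0" "c * P \<le> N^2"
  shows "1 / N^3 \<le> (1/c) powr (3/2) * P powr (-(3/2))"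
proof -
  have "(N^2) powr (3/2) = (N powr 2) powr (3/2)"
    using assms(1) by (simp add: powr_realpow)
  also have "\<dots> = N powr (2 * (3/2))" by (rule powr_powr)
  also have "\<dots> = N powr (real 3)" by simp
  also have "\<dots> = N^3" using assms(1) by (rule powr_realpow)
  finally have e: "N^3 = (N^2) powr (3/2)" by simp
  have "(c * P) powr (3/2) \<le> (N^2) powr (3/2)"
  proof (rule powr_mono2)
    show "0 \<le> c * P" using assms(2,3) by simp
  qed (use assms(4) in simp_all)
  then have *: "c powr (3/2) * P powr (3/2) \<le> N^3" unfolding e powr_mult .
  have pos: "c powr (3/2) * P powr (3/2) > 0" using assms(2,3) by simp
  have "inverse (N^3) \<le> inverse (c powr (3/2) * P powr (3/2))"
    by (rule le_imp_inverse_le[OF * pos])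
  also have "inverse (c powr (3/2) * P powr (3/2)) = (1/c) powr (3/2) * P powr (-(3/2))"
    unfolding powr_minus powr_divide[of 1 c] by (simp add: inverse_eq_divide)
  finally show ?thesis by (simp add: inverse_eq_divide)
qed

lemma int_pair_ineq:
  fixes m n :: int
  assumes "(m, n) \<noteq> (0, 0)"
  shows "(1 + real_of_int \<bar>m\<bar>) * (1 + real_of_int \<bar>n\<bar>) \<le> 3 * (real_of_int m ^ 2 + real_of_int n ^ 2)"
proof -
  have sq: "\<bar>x\<bar> \<le> x^2" for x :: int
  proof (cases "x = 0")
    case False
    then have "1 \<le> \<bar>x\<bar>" by simp
    then have "\<bar>x\<bar> * 1 \<le> \<bar>x\<bar> * \<bar>x\<bar>" by (intro mult_left_mono) auto
    then show ?thesis by (simp add: power2_eq_square)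
  qed simp
  have a: "\<bar>m\<bar> \<le> m^2" by (rule sq)
  have b: "\<bar>n\<bar> \<le> n^2" by (rule sq)
  have c: "2 * (\<bar>m\<bar> * \<bar>n\<bar>) \<le> m^2 + n^2"
    using zero_le_power2[of "\<bar>m\<bar> - \<bar>n\<bar>"] by (simp add: power2_eq_square algebra_simps)
  have d: "1 \<le> m^2 + n^2"
  proof (cases "m = 0")
    case True then have "n \<noteq> 0" using assms by auto
    then have "1 \<le> \<bar>n\<bar>" by simp
    then show ?thesis using b True by simp
  next
    case False then have "1 \<le> \<bar>m\<bar>" by simp
    then show ?thesis using a zero_le_power2[of n] by linarith
  qed
  have "(1 + \<bar>m\<bar>) * (1 + \<bar>n\<bar>) \<le> 3 * (m^2 + n^2)"
    using a b c d by (simp add: algebra_simps)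
  then have "real_of_int ((1 + \<bar>m\<bar>) * (1 + \<bar>n\<bar>)) \<le> real_of_int (3 * (m^2 + n^2))"
    by (simp only: of_int_le_iff)
  then show ?thesis by simp
qed

definition bb :: "nat \<Rightarrow> real" where "bb k = (1 + real k) powr (-(3/2))"

lemma bb_nonneg: "0 \<le> bb k" unfolding bb_def by simp

lemma summable_bb: "summable bb"
proof -
  have "summable (\<lambda>n. real n powr (-(3/2)))"
    by (subst summable_real_powr_iff) simp
  then have "summable (\<lambda>n. real (Suc n) powr (-(3/2)))"
    by (subst summable_Suc_iff)
  then show ?thesis unfolding bb_def by (simp add: add.commute)
qed

definition bz :: "int \<Rightarrow> real" where "bz m = (1 + real_of_int \<bar>m\<bar>) powr (-(3/2))"

lemma bz_nonneg: "0 \<le> bz m" unfolding bz_def by simp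

lemma sum_bz_bound:
  assumes "finite E"
  shows "sum bz E \<le> 2 * suminf bb"
proof -
  have sub: "sum bz {m\<in>E. P m} \<le> suminf bb" if inj: "inj_on f {m\<in>E. P m}"
    and eq: "\<And>m. m \<in> {m\<in>E. P m} \<Longrightarrow> bz m = bb (f m)" for P f
  proof -
    have "sum bz {m\<in>E. P m} = sum (bb \<circ> f) {m\<in>E. P m}"
      using eq by (intro sum.cong) auto
    also have "\<dots> = sum bb (f ` {m\<in>E. P m})"
      using sum.reindex[OF inj, of bb] by simp
    also have "\<dots> \<le> suminf bb"
      using assms by (intro sum_le_suminf summable_bb) (auto simp: bb_nonneg)
    finally show ?thesis .
  qed
  have E: "E = {m\<in>E. 0 \<le> m} \<union> {m\<in>E. \<not> 0 \<le> m}" by auto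
  have "sum bz E = sum bz {m\<in>E. 0 \<le> m} + sum bz {m\<in>E. \<not> 0 \<le> m}"
    using assms by (subst E, subst sum.union_disjoint) auto
  also have "\<dots> \<le> suminf bb + suminf bb"
  proof (rule add_mono)
    show "sum bz {m\<in>E. 0 \<le> m} \<le> suminf bb"
      by (rule sub[of nat]) (auto simp: inj_on_def bz_def bb_def)
    show "sum bz {m\<in>E. \<not> 0 \<le> m} \<le> suminf bb"
      by (rule sub[of "\<lambda>m. nat (- m)"]) (auto simp: inj_on_def bz_def bb_def)
  qed
  finally show ?thesis by simp
qed

locale lat =
  fixes w1 w2 :: complex
  assumes w1nz: "w1 \<noteq> 0" and indep: "Im (w2 / w1) \<noteq> 0"
begin

definition Lam :: "complex set" where
  "Lam = {of_int m * w1 + of_int n * w2 | m n :: int. True}"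

lemma Lam_iff: "z \<in> Lam \<longleftrightarrow> (\<exists>m n::int. z = of_int m * w1 + of_int n * w2)"
  unfolding Lam_def by auto

lemma Lam_0[simp]: "0 \<in> Lam"
  unfolding Lam_iff by (rule exI[of _ 0], rule exI[of _ 0]) simp

lemma Lam_w1[simp]: "w1 \<in> Lam"
  unfolding Lam_iff by (rule exI[of _ 1], rule exI[of _ 0]) simp

lemma Lam_w2[simp]: "w2 \<in> Lam"
  unfolding Lam_iff by (rule exI[of _ 0], rule exI[of _ 1]) simp

lemma Lam_add[intro]: "a \<in> Lam \<Longrightarrow> b \<in> Lam \<Longrightarrow> a + b \<in> Lam"
  unfolding Lam_iff
proof (elim exE)
  fix m n m' n' :: int
  assume "a = of_int m * w1 + of_int n * w2" "b = of_int m' * w1 + of_int n' * w2"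
  then show "\<exists>m n::int. a + b = of_int m * w1 + of_int n * w2"
    by (intro exI[of _ "m+m'"] exI[of _ "n+n'"]) (simp add: algebra_simps)
qed

lemma Lam_uminus[intro]: "a \<in> Lam \<Longrightarrow> - a \<in> Lam"
  unfolding Lam_iff
proof (elim exE)
  fix m n :: int
  assume "a = of_int m * w1 + of_int n * w2"
  then show "\<exists>m n::int. - a = of_int m * w1 + of_int n * w2"
    by (intro exI[of _ "-m"] exI[of _ "-n"]) (simp add: algebra_simps)
qed

lemma Lam_diff[intro]: "a \<in> Lam \<Longrightarrow> b \<in> Lam \<Longrightarrow> a - b \<in> Lam"
  using Lam_add[of a "-b"] Lam_uminus[of b] by simp

lemma Lam_uminus_iff[simp]: "- a \<in> Lam \<longleftrightarrow> a \<in> Lam"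
  using Lam_uminus[of a] Lam_uminus[of "-a"] by auto

lemma Lam_add_iff1: "b \<in> Lam \<Longrightarrow> a + b \<in> Lam \<longleftrightarrow> a \<in> Lam"
  using Lam_diff[of "a+b" b] Lam_add[of a b] by auto

lemma real_indep:
  fixes x y :: real
  assumes "of_real x * w1 + of_real y * w2 = 0"
  shows "x = 0 \<and> y = 0"
proof -
  have "(of_real x * w1 + of_real y * w2) / w1 = 0" using assms by simp
  then have e: "of_real x + of_real y * (w2 / w1) = 0" using w1nz by (simp add: field_simps)
  have "Im (of_real x + of_real y * (w2 / w1)) = y * Im (w2/w1)"
  proof -
    define t where "t = w2 / w1"
    show ?thesis unfolding t_def[symmetric] by simp
  qed
  with e have "y * Im (w2/w1) = 0" by simp
  with indep have y: "y = 0" by simp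
  with e show ?thesis by simp
qed

lemma half_w1_notin: "w1 / 2 \<notin> Lam"
proof
  assume "w1 / 2 \<in> Lam"
  then obtain m n :: int where e: "w1 / 2 = of_int m * w1 + of_int n * w2" unfolding Lam_iff by auto
  have "of_real (real_of_int m - 1/2) * w1 + of_real (real_of_int n) * w2 = 0"
    using e by (simp add: algebra_simps)
  from real_indep[OF this] have "real_of_int m = 1/2" by simp
  then have "2 * real_of_int m = 1" by simp
  then have "2 * m = 1" by linarith
  then show False by presburger
qed

lemma half_odd_notin:
  assumes "\<omega> \<in> Lam" "\<omega> / 2 \<in> Lam"
  shows "(\<omega> + w1) / 2 \<notin> Lam"
proof
  assume "(\<omega> + w1) / 2 \<in> Lam"
  then have "(\<omega> + w1) / 2 - \<omega> / 2 \<in> Lam" using assms by auto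
  then show False using half_w1_notin by (simp add: field_simps)
qed

definition tau where "tau = w2 / w1"

lemma quad_bound:
  fixes r s x y :: real
  assumes "s \<noteq> 0"
  shows "s^2 / (1 + r^2 + s^2) * (x^2 + y^2) \<le> (x + y * r)^2 + (y * s)^2"
proof -
  have pos: "1 + r^2 + s^2 > 0" by (simp add: add_pos_nonneg)
  have "((x + y * r)^2 + (y * s)^2) * (1 + r^2 + s^2) - s^2 * (x^2 + y^2)
        = (x + y*r)^2 + ((x + y*r) * r + y * s^2)^2"
    by (simp add: algebra_simps power2_eq_square)
  then have "s^2 * (x^2 + y^2) \<le> ((x + y * r)^2 + (y * s)^2) * (1 + r^2 + s^2)"
    by (smt (verit) zero_le_power2)
  then show ?thesis using pos by (simp add: field_simps)
qed

lemma lower_bound: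
  obtains k where "k > 0" "\<And>x y::real. k * (x^2 + y^2) \<le> (norm (of_real x * w1 + of_real y * w2))^2"
proof -
  define r where "r = Re tau"
  define s where "s = Im tau"
  have s0: "s \<noteq> 0" using indep by (simp add: s_def tau_def)
  define k where "k = (norm w1)^2 * (s^2 / (1 + r^2 + s^2))"
  have kpos: "k > 0" using s0 w1nz unfolding k_def by (simp add: add_pos_nonneg)
  have "k * (x^2 + y^2) \<le> (norm (of_real x * w1 + of_real y * w2))^2" for x y :: real
  proof -
    have "of_real x * w1 + of_real y * w2 = w1 * (of_real x + of_real y * tau)"
      using w1nz by (simp add: tau_def field_simps)
    then have "(norm (of_real x * w1 + of_real y * w2))^2 = (norm w1)^2 * (norm (of_real x + of_real y * tau))^2"
      by (simp add: norm_mult power_mult_distrib)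
    also have "(norm (of_real x + of_real y * tau))^2 = (x + y * r)^2 + (y * s)^2"
      by (simp add: cmod_power2 r_def s_def)
    finally have e: "(norm (of_real x * w1 + of_real y * w2))^2 = (norm w1)^2 * ((x + y * r)^2 + (y * s)^2)" .
    show ?thesis unfolding e k_def
      using mult_left_mono[OF quad_bound[OF s0, of r x y] zero_le_power2[of "norm w1"]]
      by (simp only: mult.assoc)
  qed
  with kpos that show ?thesis by blast
qed

lemma Lam_sep:
  obtains d where "d > 0" "\<And>\<omega>. \<omega> \<in> Lam \<Longrightarrow> \<omega> \<noteq> 0 \<Longrightarrow> d \<le> norm \<omega>"
proof -
  obtain k where k: "k > 0" "\<And>x y::real. k * (x^2 + y^2) \<le> (norm (of_real x * w1 + of_real y * w2))^2"
    using lower_bound by blast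
  have "sqrt k \<le> norm \<omega>" if w: "\<omega> \<in> Lam" "\<omega> \<noteq> 0" for \<omega>
  proof -
    obtain m n :: int where e: "\<omega> = of_int m * w1 + of_int n * w2" using w(1) by (auto simp: Lam_iff)
    have mn: "(m, n) \<noteq> (0, 0)" using w(2) e by auto
    have "1 \<le> real_of_int m ^ 2 + real_of_int n ^ 2"
    proof (cases "m = 0")
      case True then have "n \<noteq> 0" using mn by auto
      then have "1 \<le> \<bar>n\<bar>" by simp
      then have "1 \<le> \<bar>real_of_int n\<bar> ^ 2" by (intro one_le_power) simp
      then have "1 \<le> real_of_int n ^ 2" by simp
      then show ?thesis using zero_le_power2[of "real_of_int m"] by linarith
    next
      case False then have "1 \<le> \<bar>m\<bar>" by simp
      then have "1 \<le> \<bar>real_of_int m\<bar> ^ 2" by (intro one_le_power) simp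
      then have "1 \<le> real_of_int m ^ 2" by simp
      then show ?thesis by (simp add: add_increasing2)
    qed
    then have "k \<le> k * (real_of_int m ^ 2 + real_of_int n ^ 2)" using k(1) by simp
    also have "\<dots> \<le> (norm \<omega>)^2" using k(2)[of "real_of_int m" "real_of_int n"] e by simp
    finally show ?thesis by (simp add: real_le_lsqrt)
  qed
  then show ?thesis using that[of "sqrt k"] k(1) by auto
qed

definition hh :: "int \<times> int \<Rightarrow> complex" where
  "hh p = of_int (fst p) * w1 + of_int (snd p) * w2"

lemma hh_zero: "hh p = 0 \<Longrightarrow> p = (0, 0)"
  using real_indep[of "real_of_int (fst p)" "real_of_int (snd p)"] unfolding hh_def
  by (cases p) auto

lemma inj_hh: "inj hh"
proof (rule injI)
  fix p q assume "hh p = hh q"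
  then have "hh (fst p - fst q, snd p - snd q) = 0" unfolding hh_def by (simp add: algebra_simps)
  from hh_zero[OF this] show "p = q" by (simp add: prod_eq_iff)
qed

lemma Lam_hh: "Lam = range hh"
proof (intro set_eqI iffI)
  fix x assume "x \<in> Lam"
  then obtain m n :: int where "x = of_int m * w1 + of_int n * w2" by (auto simp: Lam_iff)
  then have "x = hh (m, n)" by (simp add: hh_def)
  then show "x \<in> range hh" by simp
qed (auto simp: Lam_iff hh_def)

lemma Lam_minus0: "Lam - {0} = hh ` (UNIV - {(0,0)})"
  unfolding Lam_hh using hh_zero by (auto simp: hh_def)

lemma countable_Lam: "countable Lam"
  unfolding Lam_hh by simp

lemma closed_Lam: "closed Lam"
proof -
  obtain d where d: "d > 0" "\<And>\<omega>. \<omega> \<in> Lam \<Longrightarrow> \<omega> \<noteq> 0 \<Longrightarrow> d \<le> norm \<omega>"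
    using Lam_sep by blast
  show ?thesis
  proof (rule discrete_imp_closed[OF d(1)], intro ballI impI)
    fix x y assume xy: "x \<in> Lam" "y \<in> Lam" "dist y x < d"
    show "y = x"
    proof (rule ccontr)
      assume "y \<noteq> x"
      then have "d \<le> norm (y - x)" using d(2)[of "y - x"] xy by auto
      with xy(3) show False by (simp add: dist_norm)
    qed
  qed
qed

lemma summable3: "(\<lambda>w. 1 / norm w ^ 3) summable_on (Lam - {0})"
proof -
  obtain k where k: "k > 0" "\<And>x y::real. k * (x^2 + y^2) \<le> (norm (of_real x * w1 + of_real y * w2))^2"
    using lower_bound by blast
  define C where "C = (1 / (k/3)) powr (3/2)"
  have pt: "1 / norm (hh p) ^ 3 \<le> C * (bz (fst p) * bz (snd p))" if "p \<noteq> (0,0)" for p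
  proof -
    obtain m n where p: "p = (m, n)" by (cases p)
    define P where "P = (1 + real_of_int \<bar>m\<bar>) * (1 + real_of_int \<bar>n\<bar>)"
    have Ppos: "P > 0" unfolding P_def by (intro mult_pos_pos) (auto intro: add_pos_nonneg)
    have Npos: "norm (hh p) > 0" using hh_zero[of p] that by (metis zero_less_norm_iff)
    have "k/3 * P \<le> k * (real_of_int m ^ 2 + real_of_int n ^ 2)"
      using int_pair_ineq[of m n] that p k(1) unfolding P_def by simp
    also have "\<dots> \<le> (norm (hh p))^2" using k(2)[of "real_of_int m" "real_of_int n"] p
      by (simp add: hh_def)
    finally have "k/3 * P \<le> (norm (hh p))^2" .
    have k3: "k / 3 > 0" using k(1) by simp
    have "1 / norm (hh p) ^ 3 \<le> C * P powr (-(3/2))" unfolding C_def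
      by (rule pw_ineq[OF Npos Ppos k3 \<open>k/3 * P \<le> (norm (hh p))^2\<close>])
    also have "P powr (-(3/2)) = bz (fst p) * bz (snd p)"
      unfolding P_def bz_def p by (simp add: powr_mult)
    finally show ?thesis .
  qed
  have "(\<lambda>p. 1 / norm (hh p) ^ 3) summable_on (UNIV - {(0,0)})"
  proof (rule nonneg_bdd_above_summable_on)
    show "bdd_above (sum (\<lambda>p. 1 / norm (hh p) ^ 3) ` {F. F \<subseteq> UNIV - {(0, 0)} \<and> finite F})"
    proof (rule bdd_aboveI2)
      fix F assume F: "F \<in> {F. F \<subseteq> UNIV - {(0::int, 0::int)} \<and> finite F}"
      have "(\<Sum>p\<in>F. 1 / norm (hh p) ^ 3) \<le> (\<Sum>p\<in>F. C * (bz (fst p) * bz (snd p)))"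
        using F pt by (intro sum_mono) auto
      also have "\<dots> \<le> (\<Sum>p\<in>fst ` F \<times> snd ` F. C * (bz (fst p) * bz (snd p)))"
      proof (rule sum_mono2)
        show "finite (fst ` F \<times> snd ` F)" using F by simp
        show "F \<subseteq> fst ` F \<times> snd ` F" by (rule subset_fst_snd)
        show "0 \<le> C * (bz (fst b) * bz (snd b))" for b
          unfolding C_def by (intro mult_nonneg_nonneg bz_nonneg) simp
      qed
      also have "\<dots> = C * (sum bz (fst ` F) * sum bz (snd ` F))"
      proof -
        have "(\<Sum>p\<in>fst ` F \<times> snd ` F. C * (bz (fst p) * bz (snd p)))
            = C * (\<Sum>p\<in>fst ` F \<times> snd ` F. bz (fst p) * bz (snd p))"
          by (simp add: sum_distrib_left)
        also have "(\<Sum>p\<in>fst ` F \<times> snd ` F. bz (fst p) * bz (snd p))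
            = (\<Sum>x\<in>fst ` F. \<Sum>y\<in>snd ` F. bz x * bz y)"
          by (simp add: sum.cartesian_product case_prod_unfold)
        also have "\<dots> = sum bz (fst ` F) * sum bz (snd ` F)"
          by (simp add: sum_product)
        finally show ?thesis .
      qed
      also have "\<dots> \<le> C * ((2 * suminf bb) * (2 * suminf bb))"
        using F unfolding C_def
        by (intro mult_left_mono mult_mono sum_bz_bound)
           (auto intro: sum_nonneg bz_nonneg suminf_nonneg summable_bb bb_nonneg)
      finally show "(\<Sum>p\<in>F. 1 / norm (hh p) ^ 3) \<le> C * ((2 * suminf bb) * (2 * suminf bb))" .
    qed
  qed simp
  then show ?thesis
    unfolding Lam_minus0 by (subst summable_on_reindex) (auto intro: inj_on_subset[OF inj_hh] simp: comp_def)
qed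

end


lemma summable_by_bound:
  fixes f :: "'a \<Rightarrow> complex" and M :: "'a \<Rightarrow> real"
  assumes M: "M summable_on A" and b: "\<And>a. a \<in> A \<Longrightarrow> norm (f a) \<le> M a"
  shows "(\<lambda>a. norm (f a)) summable_on A" "f summable_on A"
proof -
  have "(\<lambda>a. norm (complex_of_real (M a))) summable_on A"
  proof (rule summable_on_cong[THEN iffD1, OF _ M])
    fix a assume "a \<in> A"
    then have "0 \<le> M a" using b[of a] norm_ge_zero[of "f a"] by linarith
    then show "M a = norm (complex_of_real (M a))" by simp
  qed
  then show *: "(\<lambda>a. norm (f a)) summable_on A"
    by (rule Infinite_Sum.abs_summable_on_comparison_test) (use b in \<open>simp add: order_trans[OF _ abs_ge_self]\<close>)
  show "f summable_on A" by (rule abs_summable_summable[OF *])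
qed

lemma uniform_infsum:
  fixes f :: "'x \<Rightarrow> 'a \<Rightarrow> complex"
  assumes M: "M summable_on A" and Mnn: "\<And>a. a \<in> A \<Longrightarrow> 0 \<le> M a"
    and b: "\<And>x a. x \<in> K \<Longrightarrow> a \<in> A \<Longrightarrow> norm (f x a) \<le> M a"
  shows "uniform_limit K (\<lambda>X x. \<Sum>a\<in>X. f x a) (\<lambda>x. infsum (f x) A) (finite_subsets_at_top A)"
proof -
  have absf: "(\<lambda>a. norm (f x a)) summable_on A" if "x \<in> K" for x
    using summable_by_bound(1)[OF M b[OF that]] .
  have sf: "f x summable_on B" if "x \<in> K" "B \<subseteq> A" for x B
    using summable_on_subset[OF abs_summable_summable[OF absf[OF that(1)]] that(2)] .
  show ?thesis
    unfolding uniform_limit_iff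
  proof (intro allI impI)
    fix e :: real assume e: "e > 0"
    have "(sum M \<longlongrightarrow> infsum M A) (finite_subsets_at_top A)"
      using M has_sum_infsum unfolding has_sum_def by blast
    then have ev1: "\<forall>\<^sub>F X in finite_subsets_at_top A. dist (sum M X) (infsum M A) < e"
      using e tendstoD by blast
    have ev2: "\<forall>\<^sub>F X in finite_subsets_at_top A. finite X \<and> X \<subseteq> A"
      by (simp add: eventually_finite_subsets_at_top_weakI)
    show "\<forall>\<^sub>F X in finite_subsets_at_top A. \<forall>x\<in>K. dist (\<Sum>a\<in>X. f x a) (infsum (f x) A) < e"
      using ev1 ev2
    proof eventually_elim
      case (elim X)
      then have fin: "finite X" and XA: "X \<subseteq> A" by auto
      have AX: "A = X \<union> (A - X)" using XA by auto
      have MA: "infsum M A = sum M X + infsum M (A - X)"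
        using M fin XA by (subst AX, subst infsum_Un_disjoint) (auto intro: summable_on_subset)
      show ?case
      proof
        fix x assume x: "x \<in> K"
        have fA: "infsum (f x) A = sum (f x) X + infsum (f x) (A - X)"
          using sf[OF x] fin XA by (subst AX, subst infsum_Un_disjoint) auto
        have "dist (\<Sum>a\<in>X. f x a) (infsum (f x) A) = norm (infsum (f x) (A - X))"
          using fA by (simp add: dist_norm)
        also have "\<dots> \<le> infsum (\<lambda>a. norm (f x a)) (A - X)"
          by (rule norm_infsum_bound) (rule summable_on_subset[OF absf[OF x]], auto)
        also have "\<dots> \<le> infsum M (A - X)"
          by (rule infsum_mono) (auto intro: summable_on_subset absf[OF x] M b[OF x])
        also have "\<dots> = infsum M A - sum M X" using MA by simp
        also have "\<dots> < e" using elim by (simp add: dist_norm)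
        finally show "dist (\<Sum>a\<in>X. f x a) (infsum (f x) A) < e" .
      qed
    qed
  qed
qed

definition tt :: "complex \<Rightarrow> complex \<Rightarrow> complex" where
  "tt z w = 1 / (z - w)^2 - 1 / w^2"

lemma tt_bound:
  fixes z w :: complex and R c d :: real
  assumes "norm z \<le> R" "c > 0" "c * norm w \<le> norm (z - w)" "d > 0" "d \<le> norm w"
  shows "norm (tt z w) \<le> R * (2 + R / d) / c^2 / norm w ^ 3"
proof -
  have w0: "w \<noteq> 0" using assms by auto
  have zw0: "z - w \<noteq> 0" using assms w0 by (metis mult_pos_pos norm_eq_zero not_le zero_less_norm_iff)
  have R0: "0 \<le> R" using assms(1) norm_ge_zero order_trans by blast
  have e: "tt z w = z * (2 * w - z) / ((z - w)^2 * w^2)"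
  proof -
    have "tt z w = (1 * w^2 - 1 * (z - w)^2) / ((z - w)^2 * w^2)"
      unfolding tt_def using w0 zw0 by (intro diff_frac_eq) auto
    also have "1 * w^2 - 1 * (z - w)^2 = z * (2 * w - z)"
      by (simp add: power2_eq_square algebra_simps)
    finally show ?thesis .
  qed
  have n1: "norm (z * (2 * w - z)) \<le> R * (2 * norm w + R)"
  proof -
    have "norm (2 * w - z) \<le> 2 * norm w + R"
      using norm_triangle_ineq4[of "2*w" z] assms(1) by (simp add: norm_mult)
    then show ?thesis unfolding norm_mult using assms(1) R0
      by (intro mult_mono) auto
  qed
  have n2: "c^2 * norm w ^ 4 \<le> norm ((z - w)^2 * w^2)"
  proof -
    have "(c * norm w)^2 \<le> (norm (z - w))^2"
      using assms(3) assms(2) by (intro power_mono) auto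
    then have "(c * norm w)^2 * norm w ^ 2 \<le> (norm (z - w))^2 * norm w ^ 2"
      by (intro mult_right_mono) auto
    then show ?thesis by (simp add: norm_mult norm_power power_mult_distrib power2_eq_square power4_eq_xxxx mult_ac)
  qed
  have pos: "c^2 * norm w ^ 4 > 0" using assms w0 by simp
  have "norm (tt z w) = norm (z * (2 * w - z)) / norm ((z - w)^2 * w^2)"
    unfolding e by (simp add: norm_divide)
  also have "\<dots> \<le> R * (2 * norm w + R) / (c^2 * norm w ^ 4)"
  proof (rule frac_le)
    show "0 \<le> R * (2 * norm w + R)" using R0 by simp
  qed (use n1 n2 pos in auto)
  also have "\<dots> = R * (2 + R / norm w) / c^2 / norm w ^ 3"
    using w0 assms(2) by (simp add: field_simps power_numeral_reduce)
  also have "\<dots> \<le> R * (2 + R / d) / c^2 / norm w ^ 3"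
  proof -
    have p: "0 < norm w * d" using w0 assms(4) by simp
    have "R / norm w \<le> R / d" using assms(5) R0 p by (intro divide_left_mono) auto
    then show ?thesis using R0 assms(2) w0
      by (intro divide_right_mono mult_left_mono) auto
  qed
  finally show ?thesis .
qed

context lat
begin

lemma closed_Lam0: "closed (Lam - {0})"
proof -
  obtain d where d: "d > 0" "\<And>\<omega>. \<omega> \<in> Lam \<Longrightarrow> \<omega> \<noteq> 0 \<Longrightarrow> d \<le> norm \<omega>"
    using Lam_sep by blast
  have "Lam - {0} = Lam \<inter> - ball 0 d"
  proof (intro set_eqI iffI)
    fix x assume x: "x \<in> Lam - {0}"
    then have "d \<le> norm x" using d(2)[of x] by blast
    then show "x \<in> Lam \<inter> - ball 0 d" using x by (simp add: dist_norm)
  next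
    fix x assume "x \<in> Lam \<inter> - ball 0 d"
    then show "x \<in> Lam - {0}" using d(1) by auto
  qed
  then show ?thesis using closed_Lam by (simp add: closed_Int open_ball closed_Compl)
qed

lemma tt_bound_compact:
  assumes "compact K" "K \<inter> (Lam - {0}) = {}"
  obtains C where "\<And>z w. z \<in> K \<Longrightarrow> w \<in> Lam - {0} \<Longrightarrow> norm (tt z w) \<le> C / norm w ^ 3"
proof -
  obtain d where d: "d > 0" "\<And>\<omega>. \<omega> \<in> Lam \<Longrightarrow> \<omega> \<noteq> 0 \<Longrightarrow> d \<le> norm \<omega>"
    using Lam_sep by blast
  obtain \<delta> where \<delta>: "\<delta> > 0" "\<And>x y. x \<in> K \<Longrightarrow> y \<in> Lam - {0} \<Longrightarrow> \<delta> \<le> dist x y"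
    using separate_compact_closed[OF assms(1) closed_Lam0 assms(2)] by blast
  obtain R0 where R0: "\<And>z. z \<in> K \<Longrightarrow> norm z \<le> R0"
    using compact_imp_bounded[OF assms(1)] unfolding bounded_iff by blast
  define R where "R = max R0 0"
  have R: "0 \<le> R" "\<And>z. z \<in> K \<Longrightarrow> norm z \<le> R" using R0 unfolding R_def by force+
  define c where "c = min (1/2) (\<delta> / (2 * R + 1))"
  have c: "c > 0" unfolding c_def using \<delta> R by auto
  have "norm (tt z w) \<le> R * (2 + R / d) / c^2 / norm w ^ 3" if z: "z \<in> K" and w: "w \<in> Lam - {0}" for z w
  proof (rule tt_bound[OF R(2)[OF z] c _ d(1)])
    show "d \<le> norm w" using d w by auto
    show "c * norm w \<le> norm (z - w)"
    proof (cases "norm w \<ge> 2 * R")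
      case True
      have "norm (z - w) \<ge> norm w - norm z"
        using norm_triangle_ineq2[of w z] norm_minus_commute[of z w] by simp
      then have "norm (z - w) \<ge> norm w / 2" using True R(2)[OF z] by linarith
      moreover have "c * norm w \<le> 1/2 * norm w"
      proof (rule mult_right_mono)
        show "c \<le> 1/2" unfolding c_def by (rule min.cobounded1)
      qed simp
      ultimately show ?thesis by linarith
    next
      case False
      have "c * norm w \<le> \<delta> / (2 * R + 1) * (2 * R + 1)"
        unfolding c_def using False R(1) \<delta>(1) by (intro mult_mono) auto
      also have "\<dots> = \<delta>" using R(1) by simp
      also have "\<dots> \<le> norm (z - w)" using \<delta>(2)[OF z w] by (simp add: dist_norm)
      finally show ?thesis .
    qed
  qed
  then show ?thesis using that by blast
qed

definition qq :: "complex \<Rightarrow> complex" where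
  "qq z = infsum (tt z) (Lam - {0})"

lemma tt_summable:
  assumes "z \<notin> Lam - {0}"
  shows "tt z summable_on (Lam - {0})"
proof -
  have K: "compact {z}" "{z} \<inter> (Lam - {0}) = {}" using assms by auto
  obtain C where C: "\<And>z' w. z' \<in> {z} \<Longrightarrow> w \<in> Lam - {0} \<Longrightarrow> norm (tt z' w) \<le> C / norm w ^ 3"
    using tt_bound_compact[OF K] by blast
  have "(\<lambda>w. C * (1 / norm w ^ 3)) summable_on (Lam - {0})"
    using summable3 by (rule summable_on_cmult_right)
  then show ?thesis
    by (rule summable_by_bound(2)) (use C in simp)
qed

lemma qq_holo: "qq holomorphic_on (- (Lam - {0}))"
proof -
  have op: "open (- (Lam - {0}))" by (rule open_Compl[OF closed_Lam0])
  have "qq field_differentiable at z0" if z0: "z0 \<in> - (Lam - {0})" for z0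
  proof -
    obtain r where r: "r > 0" "cball z0 r \<subseteq> - (Lam - {0})"
      using op z0 open_contains_cball by blast
    obtain C where C: "\<And>z w. z \<in> cball z0 r \<Longrightarrow> w \<in> Lam - {0} \<Longrightarrow> norm (tt z w) \<le> C / norm w ^ 3"
      using tt_bound_compact[of "cball z0 r"] r by auto
    have Cnn: "0 \<le> C"
    proof -
      have w1L: "w1 \<in> Lam - {0}" using w1nz by simp
      have "0 \<le> C / norm w1 ^ 3"
        using C[OF _ w1L, of z0] r(1) norm_ge_zero[of "tt z0 w1"] by (meson centre_in_cball less_imp_le order_trans)
      then show ?thesis using w1nz by (simp add: zero_le_divide_iff)
    qed
    have ul: "uniform_limit (cball z0 r) (\<lambda>X z. \<Sum>w\<in>X. tt z w) qq (finite_subsets_at_top (Lam - {0}))"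
      unfolding qq_def
      by (rule uniform_infsum[of "\<lambda>w. C / norm w ^ 3"])
         (use summable_on_cmult_right[OF summable3, of C] Cnn C in auto)
    have ev: "\<forall>\<^sub>F X in finite_subsets_at_top (Lam - {0}).
          continuous_on (cball z0 r) (\<lambda>z. \<Sum>w\<in>X. tt z w) \<and> (\<lambda>z. \<Sum>w\<in>X. tt z w) holomorphic_on ball z0 r"
    proof (rule eventually_finite_subsets_at_top_weakI)
      fix X assume X: "finite X" "X \<subseteq> Lam - {0}"
      have hol: "(\<lambda>z. \<Sum>w\<in>X. tt z w) holomorphic_on cball z0 r"
        unfolding tt_def
      proof (intro holomorphic_intros)
        fix w z assume "w \<in> X" "z \<in> cball z0 r"
        then show "(z - w)^2 \<noteq> 0" using X r by auto
      qed
      show "continuous_on (cball z0 r) (\<lambda>z. \<Sum>w\<in>X. tt z w) \<and> (\<lambda>z. \<Sum>w\<in>X. tt z w) holomorphic_on ball z0 r"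
        using hol holomorphic_on_imp_continuous_on holomorphic_on_subset ball_subset_cball by blast
    qed
    obtain "qq holomorphic_on ball z0 r"
      using holomorphic_uniform_limit[OF ev ul] by auto
    then show ?thesis using r(1) holomorphic_on_imp_differentiable_at by auto
  qed
  then show ?thesis using op holomorphic_on_open field_differentiable_def
    by (metis field_differentiable_at_within holomorphic_on_def)
qed

lemma wp_eq: "wp Lam z = 1 / z^2 + qq z"
  unfolding wp_def qq_def tt_def by simp

lemma wp_holo: "wp Lam holomorphic_on (- Lam)"
proof -
  have "(\<lambda>z. 1 / z^2 + qq z) holomorphic_on (- Lam)"
    by (intro holomorphic_intros holomorphic_on_subset[OF qq_holo]) auto
  then show ?thesis by (simp add: wp_eq[abs_def])
qed

end


context lat
begin

lemma qq_even: "qq (- z) = qq z"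
proof -
  have inj: "inj_on uminus (Lam - {0::complex})" by (simp add: inj_on_def)
  have im: "uminus ` (Lam - {0}) = Lam - {0}"
  proof (intro set_eqI iffI)
    fix x assume "x \<in> Lam - {0}"
    then have "x = - (- x)" "- x \<in> Lam - {0}" by auto
    then show "x \<in> uminus ` (Lam - {0})" by (metis image_eqI)
  qed auto
  have "qq z = infsum (tt z) (uminus ` (Lam - {0}))" unfolding qq_def im ..
  also have "\<dots> = infsum (tt z \<circ> uminus) (Lam - {0})" by (rule infsum_reindex[OF inj])
  also have "\<dots> = qq (- z)" unfolding qq_def
    by (rule infsum_cong) (simp add: tt_def power2_eq_square algebra_simps)
  finally show ?thesis by simp
qed

lemma wp_even: "wp Lam (- z) = wp Lam z"
  unfolding wp_eq qq_even by simp

lemma wp_shift: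
  assumes om: "\<omega> \<in> Lam" "\<omega> \<noteq> 0"
  obtains K where "\<And>z. z \<notin> Lam \<Longrightarrow> wp Lam (z + \<omega>) = wp Lam z + K"
proof -
  define A where "A = Lam - {0}"
  define K where "K = infsum (tt \<omega>) (A - {\<omega>})"
  have "wp Lam (z + \<omega>) = wp Lam z + K" if z: "z \<notin> Lam" for z
  proof -
    have zw: "z + \<omega> \<notin> Lam" using z om Lam_add_iff1 by auto
    have s1: "tt (z + \<omega>) summable_on A" unfolding A_def by (rule tt_summable) (use zw in auto)
    have s0: "tt z summable_on A" unfolding A_def by (rule tt_summable) (use z in auto)
    have mA: "-\<omega> \<in> A" "\<omega> \<in> A" using om unfolding A_def by auto
    have inj: "inj_on (\<lambda>w. w - \<omega>) (A - {\<omega>})" by (simp add: inj_on_def)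
    have im: "(\<lambda>w. w - \<omega>) ` (A - {\<omega>}) = A - {-\<omega>}"
    proof (intro set_eqI iffI)
      fix x assume x: "x \<in> A - {-\<omega>}"
      then have "x = (x + \<omega>) - \<omega>" "x + \<omega> \<in> A - {\<omega>}"
        using om unfolding A_def by (auto simp: Lam_add_iff1 add_eq_0_iff)
      then show "x \<in> (\<lambda>w. w - \<omega>) ` (A - {\<omega>})" by (metis image_eqI)
    next
      fix x assume "x \<in> (\<lambda>w. w - \<omega>) ` (A - {\<omega>})"
      then obtain w where w: "w \<in> A - {\<omega>}" "x = w - \<omega>" by auto
      then show "x \<in> A - {-\<omega>}" using om unfolding A_def by auto
    qed
    have s0': "tt z summable_on (A - {-\<omega>})" using s0 by (rule summable_on_subset) auto
    have s2: "(\<lambda>w. tt z (w - \<omega>)) summable_on (A - {\<omega>})"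
      using s0' unfolding im[symmetric] summable_on_reindex[OF inj] by (simp add: comp_def)
    have e2: "infsum (\<lambda>w. tt z (w - \<omega>)) (A - {\<omega>}) = infsum (tt z) (A - {-\<omega>})"
      unfolding im[symmetric] infsum_reindex[OF inj] by (simp add: comp_def)
    have s1': "tt (z + \<omega>) summable_on (A - {\<omega>})" using s1 by (rule summable_on_subset) auto
    have split: "tt (z + \<omega>) w = tt z (w - \<omega>) + tt \<omega> w" for w
      unfolding tt_def by (simp add: algebra_simps power2_commute)
    have s3: "tt \<omega> summable_on (A - {\<omega>})"
    proof -
      have "(\<lambda>w. tt (z + \<omega>) w + - tt z (w - \<omega>)) summable_on (A - {\<omega>})"
        using s1' summable_on_uminus[THEN iffD2, OF s2] by (rule summable_on_add)
      moreover have "(\<lambda>w. tt (z + \<omega>) w + - tt z (w - \<omega>)) = tt \<omega>"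
        using split by (auto simp: fun_eq_iff)
      ultimately show ?thesis by simp
    qed
    have "qq (z + \<omega>) = tt (z + \<omega>) \<omega> + infsum (tt (z + \<omega>)) (A - {\<omega>})"
    proof -
      have "A = insert \<omega> (A - {\<omega>})" using mA by auto
      then have "qq (z + \<omega>) = infsum (tt (z + \<omega>)) (insert \<omega> (A - {\<omega>}))"
        unfolding qq_def A_def by simp
      also have "\<dots> = tt (z + \<omega>) \<omega> + infsum (tt (z + \<omega>)) (A - {\<omega>})"
        by (rule infsum_insert[OF s1']) simp
      finally show ?thesis .
    qed
    also have "infsum (tt (z + \<omega>)) (A - {\<omega>}) = infsum (\<lambda>w. tt z (w - \<omega>)) (A - {\<omega>}) + K"
      unfolding K_def split by (rule infsum_add[OF s2 s3])
    also have "infsum (\<lambda>w. tt z (w - \<omega>)) (A - {\<omega>}) = qq z - tt z (-\<omega>)"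
    proof -
      have "A = insert (-\<omega>) (A - {-\<omega>})" using mA by auto
      then have "qq z = infsum (tt z) (insert (-\<omega>) (A - {-\<omega>}))"
        unfolding qq_def A_def by simp
      also have "\<dots> = tt z (-\<omega>) + infsum (tt z) (A - {-\<omega>})"
        by (rule infsum_insert[OF s0']) simp
      finally show ?thesis using e2 by simp
    qed
    finally have "qq (z + \<omega>) = tt (z + \<omega>) \<omega> + (qq z - tt z (- \<omega>) + K)" .
    then show ?thesis unfolding wp_eq tt_def by (simp add: algebra_simps)
  qed
  then show ?thesis using that by blast
qed

lemma wp_per_half:
  assumes om: "\<omega> \<in> Lam" "\<omega> / 2 \<notin> Lam" and z: "z \<notin> Lam"
  shows "wp Lam (z + \<omega>) = wp Lam z"
proof -
  have "\<omega> \<noteq> 0" using om by auto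
  then obtain K where K: "\<And>z. z \<notin> Lam \<Longrightarrow> wp Lam (z + \<omega>) = wp Lam z + K"
    using wp_shift om by blast
  have m: "- (\<omega> / 2) \<notin> Lam" using om by simp
  have "wp Lam (- (\<omega> / 2) + \<omega>) = wp Lam (- (\<omega> / 2)) + K" using K[OF m] .
  moreover have "- (\<omega> / 2) + \<omega> = \<omega> / 2" by simp
  ultimately have "wp Lam (\<omega> / 2) = wp Lam (\<omega> / 2) + K" using wp_even[of "\<omega>/2"] by simp
  then have "K = 0" by simp
  then show ?thesis using K[OF z] by simp
qed

lemma wp_per:
  assumes om: "\<omega> \<in> Lam" and z: "z \<notin> Lam"
  shows "wp Lam (z + \<omega>) = wp Lam z"
proof (cases "\<omega> / 2 \<in> Lam")
  case False
  then show ?thesis using wp_per_half om z by blast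
next
  case True
  have a: "(\<omega> + w1) / 2 \<notin> Lam" using half_odd_notin[OF om True] .
  have b: "\<omega> + w1 \<in> Lam" using om by auto
  have zw: "z + \<omega> \<notin> Lam" using z om Lam_add_iff1 by auto
  have "wp Lam (z + \<omega>) = wp Lam (z + \<omega> + w1)"
    using wp_per_half[OF Lam_w1 half_w1_notin zw] by simp
  also have "\<dots> = wp Lam (z + (\<omega> + w1))" by (simp add: add.assoc)
  also have "\<dots> = wp Lam z" using wp_per_half[OF b a z] .
  finally show ?thesis .
qed

lemma sep_ball:
  obtains d where "d > 0" "ball 0 d \<inter> Lam = {0}"
proof -
  obtain d where d: "d > 0" "\<And>\<omega>. \<omega> \<in> Lam \<Longrightarrow> \<omega> \<noteq> 0 \<Longrightarrow> d \<le> norm \<omega>"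
    using Lam_sep by blast
  have "ball 0 d \<inter> Lam = {0}"
  proof (intro set_eqI iffI)
    fix x assume x: "x \<in> ball 0 d \<inter> Lam"
    show "x \<in> {0}"
    proof (rule ccontr)
      assume "x \<notin> {0}"
      then have "d \<le> norm x" using d(2)[of x] x by auto
      then show False using x by simp
    qed
  qed (use d in auto)
  then show ?thesis using that d(1) by blast
qed

lemma qq_holo_ball:
  assumes "ball 0 d \<inter> Lam = {0}"
  shows "qq holomorphic_on ball 0 d"
  by (rule holomorphic_on_subset[OF qq_holo]) (use assms in auto)

lemma wp_near0: "z \<noteq> 0 \<Longrightarrow> z^2 * wp Lam z = 1 + z^2 * qq z"
  unfolding wp_eq by (simp add: field_simps)

end


lemma holo_local:
  assumes "open S" "\<And>z. z \<in> S \<Longrightarrow> \<exists>U. open U \<and> z \<in> U \<and> F holomorphic_on U"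
  shows "F holomorphic_on S"
proof -
  have "\<exists>f'. DERIV F z :> f'" if "z \<in> S" for z
  proof -
    have "\<exists>U. open U \<and> z \<in> U \<and> F holomorphic_on U" using assms(2) that by blast
    then obtain U where U: "open U" "z \<in> U" "F holomorphic_on U" by blast
    have "F field_differentiable (at z)" by (rule holomorphic_on_imp_differentiable_at[OF U(3) U(1) U(2)])
    then show ?thesis by (simp add: field_differentiable_def)
  qed
  then show ?thesis using assms(1) holomorphic_on_open by blast
qed

context lat
begin

definition Par :: "complex set" where
  "Par = (\<lambda>p. of_real (fst p) * w1 + of_real (snd p) * w2) ` ({0..1} \<times> {0..1})"

lemma compact_Par: "compact Par"
  unfolding Par_def
  by (intro compact_continuous_image compact_Times compact_Icc continuous_intros)

lemma reduce_Par: "\<exists>\<omega>\<in>Lam. z - \<omega> \<in> Par"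
proof -
  define t where "t = Im (z / w1) / Im tau"
  define s where "s = Re (z / w1) - t * Re tau"
  have it: "Im tau \<noteq> 0" using indep by (simp add: tau_def)
  have "of_real s + of_real t * tau = z / w1"
    using it by (simp add: complex_eq_iff s_def t_def)
  then have zst: "z = of_real s * w1 + of_real t * w2"
    using w1nz by (simp add: tau_def field_simps)
  define \<omega> where "\<omega> = of_int \<lfloor>s\<rfloor> * w1 + of_int \<lfloor>t\<rfloor> * w2"
  have om: "\<omega> \<in> Lam" unfolding \<omega>_def Lam_iff by blast
  have "z - \<omega> = of_real (s - of_int \<lfloor>s\<rfloor>) * w1 + of_real (t - of_int \<lfloor>t\<rfloor>) * w2"
    unfolding zst \<omega>_def by (simp add: algebra_simps)
  moreover have "(s - of_int \<lfloor>s\<rfloor>, t - of_int \<lfloor>t\<rfloor>) \<in> {0..1} \<times> {0..1}"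
    by (auto simp: floor_le_iff) linarith+
  ultimately have "z - \<omega> \<in> Par" unfolding Par_def by (metis (no_types, lifting) fst_conv image_eqI snd_conv)
  then show ?thesis using om by blast
qed

lemma elliptic_const:
  assumes hol: "F holomorphic_on UNIV" and per: "\<And>z \<omega>. \<omega> \<in> Lam \<Longrightarrow> F (z + \<omega>) = F z"
  shows "\<exists>c. \<forall>z. F z = c"
proof -
  have "range F \<subseteq> F ` Par"
  proof
    fix y assume "y \<in> range F"
    then obtain z where z: "y = F z" by auto
    obtain \<omega> where om: "\<omega> \<in> Lam" "z - \<omega> \<in> Par" using reduce_Par by blast
    have "F z = F ((z - \<omega>) + \<omega>)" by simp
    also have "\<dots> = F (z - \<omega>)" by (rule per[OF om(1)])
    finally show "y \<in> F ` Par" using z om(2) by blast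
  qed
  moreover have "compact (F ` Par)"
    by (intro compact_continuous_image compact_Par holomorphic_on_imp_continuous_on
        holomorphic_on_subset[OF hol]) auto
  ultimately have "bounded (range F)" using compact_imp_bounded bounded_subset by blast
  then have "F constant_on UNIV" by (rule Liouville_theorem[OF hol])
  then show ?thesis unfolding constant_on_def by blast
qed

definition ell :: "(complex \<Rightarrow> complex) \<Rightarrow> bool" where
  "ell f \<longleftrightarrow> f holomorphic_on (- Lam) \<and> (\<forall>z \<omega>. z \<notin> Lam \<longrightarrow> \<omega> \<in> Lam \<longrightarrow> f (z + \<omega>) = f z)
     \<and> (\<forall>z. z \<notin> Lam \<longrightarrow> f (- z) = f z)"

definition polebound :: "nat \<Rightarrow> (complex \<Rightarrow> complex) \<Rightarrow> bool" where
  "polebound n f \<longleftrightarrow> (\<exists>r>0. \<exists>g. g holomorphic_on ball 0 r \<and> (\<forall>z\<in>ball 0 r - {0}. g z = z^(2*n) * f z))"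

lemma ell_wp: "ell (wp Lam)"
  unfolding ell_def
proof (intro conjI allI impI)
  show "wp Lam holomorphic_on - Lam" by (rule wp_holo)
  show "wp Lam (z + \<omega>) = wp Lam z" if "z \<notin> Lam" "\<omega> \<in> Lam" for z \<omega> by (rule wp_per[OF that(2,1)])
  show "wp Lam (- z) = wp Lam z" for z by (rule wp_even)
qed

lemma ell_const: "ell (\<lambda>z. c)"
  unfolding ell_def by simp

lemma ell_diff: assumes "ell f" "ell g" shows "ell (\<lambda>z. f z - g z)"
  using assms unfolding ell_def by (simp add: holomorphic_on_diff)

lemma ell_mult: assumes "ell f" "ell g" shows "ell (\<lambda>z. f z * g z)"
  using assms unfolding ell_def by (simp add: holomorphic_on_mult)

lemma ell_power: assumes "ell f" shows "ell (\<lambda>z. f z ^ n)"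
  using assms unfolding ell_def by (simp add: holomorphic_on_power)

lemma notin_Lam_small:
  assumes "ball 0 d \<inter> Lam = {0}" "z \<in> ball 0 d" "z \<noteq> 0"
  shows "z \<notin> Lam"
proof
  assume "z \<in> Lam"
  then have "z \<in> ball 0 d \<inter> Lam" using assms(2) by blast
  then show False using assms(1,3) by blast
qed

lemma reduce_base:
  assumes "ell f" "polebound 0 f"
  shows "\<exists>c. \<forall>z. z \<notin> Lam \<longrightarrow> f z = c"
proof -
  obtain d where d: "d > 0" "ball 0 d \<inter> Lam = {0}" using sep_ball by blast
  obtain r g where rg: "r > 0" "g holomorphic_on ball 0 r" "\<And>z. z \<in> ball 0 r - {0} \<Longrightarrow> g z = f z"
    using assms(2) unfolding polebound_def by auto
  define r' where "r' = min r d"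
  have r': "r' > 0" "ball 0 r' \<subseteq> ball 0 r" "ball 0 r' \<subseteq> ball 0 d" using rg d unfolding r'_def by auto
  have fhol: "f holomorphic_on (- Lam)" and fper: "\<And>z \<omega>. z \<notin> Lam \<Longrightarrow> \<omega> \<in> Lam \<Longrightarrow> f (z + \<omega>) = f z"
    using assms(1) unfolding ell_def by auto
  define F where "F z = (if z \<in> Lam then g 0 else f z)" for z
  have openL: "open (- Lam)" using closed_Lam by (simp add: open_Compl)
  have "F holomorphic_on UNIV"
  proof (rule holo_local)
    fix z0 :: complex
    show "\<exists>U. open U \<and> z0 \<in> U \<and> F holomorphic_on U"
    proof (cases "z0 \<in> Lam")
      case False
      have "F holomorphic_on (- Lam)"
        by (rule holomorphic_transform[OF fhol]) (simp add: F_def)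
      then show ?thesis using False openL by blast
    next
      case True
      have "(\<lambda>z. g (z - z0)) holomorphic_on ball z0 r'"
      proof (rule holomorphic_on_compose_gen[where g = g and t = "ball 0 r", unfolded o_def])
        show "(\<lambda>z. z - z0) holomorphic_on ball z0 r'" by (intro holomorphic_intros)
        show "g holomorphic_on ball 0 r" by (rule rg(2))
        show "(\<lambda>z. z - z0) ` ball z0 r' \<subseteq> ball 0 r"
        proof
          fix y assume "y \<in> (\<lambda>z. z - z0) ` ball z0 r'"
          then obtain z where z: "z \<in> ball z0 r'" "y = z - z0" by blast
          then have "y \<in> ball 0 r'" by (simp add: dist_norm norm_minus_commute)
          then show "y \<in> ball 0 r" using r'(2) by blast
        qed
      qed
      moreover have "g (z - z0) = F z" if z: "z \<in> ball z0 r'" for z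
      proof (cases "z = z0")
        case True
        then show ?thesis using \<open>z0 \<in> Lam\<close> by (simp add: F_def)
      next
        case False
        have zb: "z - z0 \<in> ball 0 r'" using z by (simp add: dist_norm norm_minus_commute)
        have zn: "z - z0 \<notin> Lam"
          by (rule notin_Lam_small[OF d(2)]) (use zb r'(3) in blast, use False in simp)
        have znl: "z \<notin> Lam"
        proof
          assume "z \<in> Lam"
          then have "z - z0 \<in> Lam" using \<open>z0 \<in> Lam\<close> by auto
          then show False using zn by blast
        qed
        have "F z = f ((z - z0) + z0)" using znl by (simp add: F_def)
        also have "\<dots> = f (z - z0)" by (rule fper[OF zn \<open>z0 \<in> Lam\<close>])
        also have "\<dots> = g (z - z0)"
        proof -
          have ne: "z - z0 \<noteq> 0" using False by simp
          have "z - z0 \<in> ball 0 r" using zb r'(2) by (rule subsetD[rotated])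
          then have "z - z0 \<in> ball 0 r - {0}" using ne by simp
          then show ?thesis using rg(3)[of "z - z0"] by simp
        qed
        finally show ?thesis by simp
      qed
      ultimately have "F holomorphic_on ball z0 r'" by (rule holomorphic_transform)
      moreover have "z0 \<in> ball z0 r'" using r'(1) by simp
      ultimately show ?thesis using open_ball by blast
    qed
  qed simp
  moreover have "F (z + \<omega>) = F z" if "\<omega> \<in> Lam" for z \<omega>
  proof (cases "z \<in> Lam")
    case True then show ?thesis using that by (auto simp: F_def)
  next
    case False
    then have "z + \<omega> \<notin> Lam" using that Lam_add_iff1 by blast
    then show ?thesis using False fper[OF False that] by (simp add: F_def)
  qed
  ultimately obtain c where "\<forall>z. F z = c" using elliptic_const by blast
  then show ?thesis by (metis F_def)
qed

end


lemma even_deriv0: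
  assumes hol: "g holomorphic_on ball 0 r" and r: "r > 0"
    and ev: "\<And>z. z \<in> ball 0 r \<Longrightarrow> g (- z) = g z"
  shows "deriv g 0 = (0::complex)"
proof -
  have c0: "(0::complex) \<in> ball 0 r" using r by simp
  have d1: "(g has_field_derivative deriv g 0) (at 0)"
    by (rule holomorphic_derivI[OF hol open_ball c0])
  have d1': "(g has_field_derivative deriv g 0) (at (- 0))" using d1 by simp
  have dm: "((\<lambda>z::complex. - z) has_field_derivative (- 1)) (at 0)"
    by (auto intro!: derivative_eq_intros)
  have d2: "((\<lambda>z. g (- z)) has_field_derivative (deriv g 0 * (- 1))) (at 0)"
    by (rule DERIV_chain2[OF d1' dm])
  have d3: "(g has_field_derivative (deriv g 0 * (- 1))) (at 0)"
    by (rule has_field_derivative_transform_within_open[OF d2 open_ball c0]) (rule ev)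
  have "deriv g 0 = deriv g 0 * (- 1)" by (rule DERIV_unique[OF d1 d3])
  then show ?thesis by simp
qed

lemma pole_div:
  assumes hol: "h holomorphic_on ball 0 r" and r: "r > 0"
  shows "(\<lambda>z. if z = 0 then deriv h 0 else (h z - h 0) / z) holomorphic_on ball (0::complex) r"
proof -
  have "0 \<in> interior (ball (0::complex) r)" using r by simp
  from pole_lemma[OF hol this] show ?thesis by (simp only: diff_zero)
qed

context lat
begin

lemma reduce:
  "\<And>f. ell f \<Longrightarrow> polebound n f \<Longrightarrow> \<exists>A. \<forall>z. z \<notin> Lam \<longrightarrow> f z = poly A (wp Lam z)"
proof (induction n)
  case 0
  then obtain c where "\<forall>z. z \<notin> Lam \<longrightarrow> f z = c" using reduce_base by blast
  then show ?case by (intro exI[of _ "[:c:]"]) simp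
next
  case (Suc n)
  obtain r g where rg: "r > 0" "g holomorphic_on ball 0 r"
    "\<And>z. z \<in> ball 0 r - {0} \<Longrightarrow> g z = z^(2 * Suc n) * f z"
    using Suc.prems(2) unfolding polebound_def by auto
  obtain d where d: "d > 0" "ball 0 d \<inter> Lam = {0}" using sep_ball by blast
  define r' where "r' = min r d"
  have r': "r' > 0" "ball 0 r' \<subseteq> ball 0 r" "ball 0 r' \<subseteq> ball 0 d" using rg d unfolding r'_def by auto
  have ghol: "g holomorphic_on ball 0 r'" using rg(2) r'(2) by (rule holomorphic_on_subset)
  have fev: "\<And>z. z \<notin> Lam \<Longrightarrow> f (- z) = f z" using Suc.prems(1) unfolding ell_def by blast
  have notL: "z \<notin> Lam" if "z \<in> ball 0 r'" "z \<noteq> 0" for z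
    by (rule notin_Lam_small[OF d(2)]) (use that r'(3) in blast, use that in simp)
  have gf: "g z = z^(2 * Suc n) * f z" if "z \<in> ball 0 r'" "z \<noteq> 0" for z
  proof -
    have "z \<in> ball 0 r" using that(1) r'(2) by (rule subsetD[rotated])
    then show ?thesis using rg(3)[of z] that(2) by simp
  qed
  have gev: "g (- z) = g z" if z: "z \<in> ball 0 r'" for z
  proof (cases "z = 0")
    case False
    have mz: "- z \<in> ball 0 r'" using z by simp
    have "g (- z) = (- z)^(2 * Suc n) * f (- z)" by (rule gf[OF mz]) (use False in simp)
    also have "\<dots> = z^(2 * Suc n) * f z" using fev[OF notL[OF z False]] by simp
    also have "\<dots> = g z" using gf[OF z False] by simp
    finally show ?thesis .
  qed simp
  have dg0: "deriv g 0 = 0" by (rule even_deriv0[OF ghol r'(1)]) (rule gev)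
  define k1 where "k1 z = (if z = 0 then deriv g 0 else (g z - g 0) / z)" for z
  have k1hol: "k1 holomorphic_on ball 0 r'" unfolding k1_def[abs_def] by (rule pole_div[OF ghol r'(1)])
  have k10: "k1 0 = 0" unfolding k1_def using dg0 by simp
  define k2 where "k2 z = (if z = 0 then deriv k1 0 else (k1 z - k1 0) / z)" for z
  have k2hol: "k2 holomorphic_on ball 0 r'" unfolding k2_def[abs_def] by (rule pole_div[OF k1hol r'(1)])
  define c where "c = g 0"
  have gk2: "g z = c + z^2 * k2 z" if "z \<noteq> 0" for z
    using that dg0 unfolding k2_def k1_def c_def by (simp add: power2_eq_square field_simps)
  define f1 where "f1 z = f z - c * wp Lam z ^ Suc n" for z
  have ell1: "ell f1"
    unfolding f1_def[abs_def]
    by (intro ell_diff[OF Suc.prems(1)] ell_mult[OF ell_const] ell_power[OF ell_wp])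
  define G where "G z = k2 z - c * qq z * (\<Sum>i<Suc n. (1 + z^2 * qq z)^i)" for z
  have qhol: "qq holomorphic_on ball 0 r'"
    using qq_holo_ball[OF d(2)] r'(3) by (rule holomorphic_on_subset)
  have Ghol: "G holomorphic_on ball 0 r'"
    unfolding G_def[abs_def] by (intro holomorphic_intros k2hol qhol)
  have GF: "G z = z^(2*n) * f1 z" if z: "z \<in> ball 0 r' - {0}" for z
  proof -
    have z0: "z \<noteq> 0" and zb: "z \<in> ball 0 r'" using z by auto
    define w where "w = wp Lam z"
    define a where "a = 1 + z^2 * qq z"
    have aw: "a = z^2 * w" unfolding a_def w_def using wp_near0[OF z0] by simp
    have A: "z^2 * (z^(2*n) * f z) = c + z^2 * k2 z"
    proof -
      have "z^2 * (z^(2*n) * f z) = z^(2 * Suc n) * f z" by (simp add: power_add power_mult_distrib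
            mult_ac flip: power_Suc2 power_add)
      also have "\<dots> = g z" using gf[OF zb z0] by simp
      finally show ?thesis using gk2[OF z0] by simp
    qed
    have B: "z^2 * (z^(2*n) * w ^ Suc n) = 1 + z^2 * (qq z * (\<Sum>i<Suc n. a^i))"
    proof -
      have "z^2 * (z^(2*n) * w ^ Suc n) = (z^2 * w) ^ Suc n"
        by (simp add: power_mult_distrib power_mult[symmetric] mult_ac)
      also have "\<dots> = a ^ Suc n" using aw by simp
      also have "\<dots> = 1 + (a ^ Suc n - 1)" by simp
      also have "\<dots> = 1 + (a - 1) * (\<Sum>i<Suc n. a^i)" by (simp only: power_diff_1_eq)
      also have "a - 1 = z^2 * qq z" unfolding a_def by simp
      finally show ?thesis by (simp add: mult_ac)
    qed
    have "z^2 * (z^(2*n) * f1 z) = z^2 * (z^(2*n) * f z) - c * (z^2 * (z^(2*n) * w ^ Suc n))"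
      unfolding f1_def w_def by (simp add: algebra_simps)
    also have "\<dots> = z^2 * G z" unfolding A B G_def a_def by (simp add: algebra_simps)
    finally have "z^2 * (z^(2*n) * f1 z) = z^2 * G z" .
    then show ?thesis using z0 by simp
  qed
  have "polebound n f1" unfolding polebound_def using r'(1) Ghol GF by blast
  then obtain A1 where A1: "\<forall>z. z \<notin> Lam \<longrightarrow> f1 z = poly A1 (wp Lam z)" using Suc.IH ell1 by blast
  show ?case
  proof (intro exI[of _ "A1 + monom c (Suc n)"] allI impI)
    fix z assume "z \<notin> Lam"
    then show "f z = poly (A1 + monom c (Suc n)) (wp Lam z)"
      using A1 unfolding f1_def by (simp add: poly_monom algebra_simps)
  qed
qed

end


context lat
begin

lemma Lam_int_mult: "\<omega> \<in> Lam \<Longrightarrow> of_int k * \<omega> \<in> Lam"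
  unfolding Lam_iff
proof (elim exE)
  fix m n :: int
  assume "\<omega> = of_int m * w1 + of_int n * w2"
  then show "\<exists>m n::int. of_int k * \<omega> = of_int m * w1 + of_int n * w2"
    by (intro exI[of _ "k*m"] exI[of _ "k*n"]) (simp add: algebra_simps)
qed

lemma punct_ball: "\<exists>e>0. \<forall>y\<in>ball z e. y \<noteq> z \<longrightarrow> y \<notin> Lam"
proof (cases "z \<in> Lam")
  case True
  obtain d where d: "d > 0" "\<And>\<omega>. \<omega> \<in> Lam \<Longrightarrow> \<omega> \<noteq> 0 \<Longrightarrow> d \<le> norm \<omega>"
    using Lam_sep by blast
  have "y \<notin> Lam" if "y \<in> ball z d" "y \<noteq> z" for y
  proof
    assume "y \<in> Lam"
    then have "y - z \<in> Lam" using True by auto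
    moreover have "y - z \<noteq> 0" using that(2) by simp
    ultimately have "d \<le> norm (y - z)" using d(2) by blast
    then show False using that(1) by (simp add: dist_norm norm_minus_commute)
  qed
  then show ?thesis using d(1) by blast
next
  case False
  have "open (- Lam)" using closed_Lam by (simp add: open_Compl)
  then obtain e where "e > 0" "ball z e \<subseteq> - Lam" using False open_contains_ball by blast
  then show ?thesis by blast
qed

lemma qq0: "qq 0 = 0"
  unfolding qq_def tt_def by simp

lemma wp_unbounded:
  assumes r: "r > 0"
  shows "\<exists>z. z \<noteq> 0 \<and> norm z < r \<and> norm (wp Lam z) > M"
proof -
  obtain d where d: "d > 0" "ball 0 d \<inter> Lam = {0}" using sep_ball by blast
  have "continuous_on (ball 0 d) qq" by (rule holomorphic_on_imp_continuous_on[OF qq_holo_ball[OF d(2)]])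
  then have "isCont qq 0" by (rule continuous_on_interior) (simp add: d(1))
  then obtain e where e: "e > 0" "\<And>y. dist y 0 < e \<Longrightarrow> dist (qq y) (qq 0) < 1"
    unfolding continuous_at_eps_delta by (meson zero_less_one)
  define s where "s = min (min (min d e) r / 2) (1 / (max M 0 + 2))"
  have s0: "s > 0" using d(1) e(1) r unfolding s_def by (simp add: add_pos_nonneg)
  have sd: "s < d" "s < e" "s < r" using d(1) e(1) r s0 unfolding s_def by linarith+
  define z where "z = complex_of_real s"
  have z0: "z \<noteq> 0" using s0 by (simp add: z_def)
  have zb: "z \<in> ball 0 d" using sd s0 by (simp add: z_def)
  have zL: "z \<notin> Lam" by (rule notin_Lam_small[OF d(2) zb z0])
  have qb: "norm (qq z) < 1" using e(2)[of z] sd s0 qq0 by (simp add: z_def)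
  have "norm (1 / z^2) = 1 / s^2" using s0 by (simp add: z_def norm_divide norm_power)
  moreover have "1 / s^2 \<ge> max M 0 + 2"
  proof -
    have "s \<le> 1 / (max M 0 + 2)" unfolding s_def by simp
    then have "s * (max M 0 + 2) \<le> 1" using s0 by (simp add: field_simps)
    moreover have "s \<le> 1" using \<open>s \<le> 1 / (max M 0 + 2)\<close> by (smt (verit) divide_le_eq_1 max.cobounded2)
    ultimately have "s^2 * (max M 0 + 2) \<le> 1"
      using s0 by (smt (verit) mult_left_le_one_le mult_nonneg_nonneg power2_eq_square mult.assoc max.cobounded2)
    then show ?thesis using s0 by (simp add: field_simps)
  qed
  ultimately have "norm (1 / z^2) \<ge> max M 0 + 2" by simp
  moreover have "norm (wp Lam z) \<ge> norm (1 / z^2) - norm (qq z)"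
    unfolding wp_eq by (rule norm_diff_ineq)
  ultimately have "norm (wp Lam z) > M" using qb by linarith
  moreover have "norm z < r" using s0 sd by (simp add: z_def)
  ultimately show ?thesis using z0 by blast
qed

end

lemma cont_eq_at:
  fixes f g :: "complex \<Rightarrow> complex"
  assumes "isCont f z" "isCont g z" "eventually (\<lambda>y. f y = g y) (at z)"
  shows "f z = g z"
proof -
  have "(f \<longlongrightarrow> f z) (at z)" using assms(1) by (simp add: isCont_def)
  moreover have "(f \<longlongrightarrow> g z) (at z)"
    using assms(2) by (simp add: isCont_def) (rule tendsto_cong[THEN iffD1, OF _ ], use assms(3) in \<open>auto elim: eventually_mono\<close>)
  ultimately show ?thesis by (rule tendsto_unique[rotated 1]) simp
qed

locale two = A: lat w1 w2 + B: lat v1 v2 for w1 w2 v1 v2 +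
  assumes sub: "B.Lam \<subseteq> A.Lam"
begin

lemma finite_index: "\<exists>D::int. D > 0 \<and> (\<forall>\<omega>\<in>A.Lam. of_int D * \<omega> \<in> B.Lam)"
proof -
  have "v1 \<in> A.Lam" "v2 \<in> A.Lam" using sub B.Lam_w1 B.Lam_w2 by blast+
  then obtain a b c d :: int where ab: "v1 = of_int a * w1 + of_int b * w2"
    and cd: "v2 = of_int c * w1 + of_int d * w2"
    unfolding A.Lam_iff by blast
  define D0 where "D0 = a * d - b * c"
  have e1: "of_int D0 * w1 = of_int d * v1 - of_int b * v2"
    unfolding ab cd D0_def by (simp add: algebra_simps)
  have e2: "of_int D0 * w2 = - of_int c * v1 + of_int a * v2"
    unfolding ab cd D0_def by (simp add: algebra_simps)
  have D0: "D0 \<noteq> 0"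
  proof
    assume "D0 = 0"
    then have "of_real (real_of_int d) * v1 + of_real (- real_of_int b) * v2 = 0"
      "of_real (- real_of_int c) * v1 + of_real (real_of_int a) * v2 = 0"
      using e1 e2 by (simp_all add: algebra_simps)
    from B.real_indep[OF this(1)] B.real_indep[OF this(2)] have "a = 0" "b = 0" by simp_all
    then show False using ab B.w1nz by simp
  qed
  have m1: "of_int D0 * w1 \<in> B.Lam" unfolding e1 B.Lam_iff by (intro exI[of _ d] exI[of _ "-b"]) simp
  have m2: "of_int D0 * w2 \<in> B.Lam" unfolding e2 B.Lam_iff by (intro exI[of _ "-c"] exI[of _ a]) simp
  have "of_int \<bar>D0\<bar> * \<omega> \<in> B.Lam" if om: "\<omega> \<in> A.Lam" for \<omega>
  proof -
    obtain m n :: int where mn: "\<omega> = of_int m * w1 + of_int n * w2" using om unfolding A.Lam_iff by blast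
    have "of_int D0 * \<omega> = of_int m * (of_int D0 * w1) + of_int n * (of_int D0 * w2)"
      unfolding mn by (simp add: algebra_simps)
    also have "\<dots> \<in> B.Lam" by (rule B.Lam_add[OF B.Lam_int_mult[OF m1] B.Lam_int_mult[OF m2]])
    finally have *: "of_int D0 * \<omega> \<in> B.Lam" .
    show ?thesis
    proof (cases "D0 \<ge> 0")
      case True then show ?thesis using * by simp
    next
      case False
      then have "of_int \<bar>D0\<bar> * \<omega> = - (of_int D0 * \<omega>)" by simp
      then show ?thesis using * by simp
    qed
  qed
  then show ?thesis using D0 by (intro exI[of _ "\<bar>D0\<bar>"]) auto
qed

definition Dix where "Dix = (SOME D::int. D > 0 \<and> (\<forall>\<omega>\<in>A.Lam. of_int D * \<omega> \<in> B.Lam))"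

lemma Dix: "Dix > 0" "\<And>\<omega>. \<omega> \<in> A.Lam \<Longrightarrow> of_int Dix * \<omega> \<in> B.Lam"
  using someI_ex[OF finite_index] unfolding Dix_def by blast+

definition Reps where
  "Reps = (\<lambda>p. of_int (fst p) * w1 + of_int (snd p) * w2) ` ({0..<Dix} \<times> {0..<Dix})"

lemma finite_Reps: "finite Reps" unfolding Reps_def by simp

lemma Reps_sub: "Reps \<subseteq> A.Lam"
proof -
  have e: "(\<lambda>p. of_int (fst p) * w1 + of_int (snd p) * w2) = A.hh" by (simp add: A.hh_def fun_eq_iff)
  show ?thesis unfolding Reps_def A.Lam_hh e by (rule image_mono) simp
qed

lemma to_Reps: assumes "\<omega> \<in> A.Lam" shows "\<exists>\<rho>\<in>Reps. \<omega> - \<rho> \<in> B.Lam"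
proof -
  obtain m n :: int where mn: "\<omega> = of_int m * w1 + of_int n * w2" using assms by (auto simp: A.Lam_iff)
  define \<rho> where "\<rho> = of_int (m mod Dix) * w1 + of_int (n mod Dix) * w2"
  have "\<rho> \<in> Reps" unfolding Reps_def \<rho>_def using Dix(1)
    by (intro image_eqI[of _ _ "(m mod Dix, n mod Dix)"]) auto
  moreover have "\<omega> - \<rho> = of_int (m div Dix) * (of_int Dix * w1) + of_int (n div Dix) * (of_int Dix * w2)"
  proof -
    have "m = Dix * (m div Dix) + m mod Dix" "n = Dix * (n div Dix) + n mod Dix" by simp_all
    then have "of_int m = (of_int Dix * of_int (m div Dix) + of_int (m mod Dix) :: complex)"
      "of_int n = (of_int Dix * of_int (n div Dix) + of_int (n mod Dix) :: complex)"
      by (metis of_int_add of_int_mult)+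
    then show ?thesis unfolding mn \<rho>_def by (simp add: algebra_simps)
  qed
  moreover have "\<dots> \<in> B.Lam"
    by (rule B.Lam_add[OF B.Lam_int_mult[OF Dix(2)[OF A.Lam_w1]] B.Lam_int_mult[OF Dix(2)[OF A.Lam_w2]]])
  ultimately show ?thesis by (intro bexI[of _ \<rho>]) simp_all
qed

end


lemma poly_sum_le:
  fixes P :: "'a::comm_ring_1 poly"
  assumes "degree P \<le> m"
  shows "poly P x = (\<Sum>i\<le>m. coeff P i * x ^ i)"
proof -
  have "poly P x = poly (\<Sum>i\<le>m. monom (coeff P i) i) x" using poly_as_sum_of_monoms'[OF assms] by simp
  also have "\<dots> = (\<Sum>i\<le>m. coeff P i * x ^ i)" by (simp add: poly_sum poly_monom)
  finally show ?thesis .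
qed

lemma holo_poly_comp:
  assumes "f holomorphic_on S"
  shows "(\<lambda>z. poly P (f z)) holomorphic_on S"
proof -
  have "(\<lambda>z. \<Sum>i\<le>degree P. coeff P i * f z ^ i) holomorphic_on S"
    by (intro holomorphic_intros assms)
  then show ?thesis using poly_sum_le[of P "degree P"] by simp
qed

context lat
begin

lemma polyexp:
  assumes "degree P \<le> m" "z \<noteq> 0"
  shows "z^(2*m) * poly P (wp Lam z) = (\<Sum>i\<le>m. coeff P i * z^(2*(m-i)) * (1 + z^2 * qq z)^i)"
proof -
  have "z^(2*m) * poly P (wp Lam z) = (\<Sum>i\<le>m. coeff P i * (z^(2*m) * wp Lam z ^ i))"
    unfolding poly_sum_le[OF assms(1)] by (simp add: sum_distrib_left mult_ac)
  also have "\<dots> = (\<Sum>i\<le>m. coeff P i * z^(2*(m-i)) * (1 + z^2 * qq z)^i)"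
  proof (rule sum.cong[OF refl])
    fix i assume "i \<in> {..m}"
    then have im: "i \<le> m" by simp
    have "z^(2*m) = z^(2*(m-i)) * (z^2)^i"
      using im by (simp add: power_add[symmetric] power_mult[symmetric] algebra_simps)
    then have "z^(2*m) * wp Lam z ^ i = z^(2*(m-i)) * (z^2 * wp Lam z)^i"
      by (simp add: power_mult_distrib)
    also have "z^2 * wp Lam z = 1 + z^2 * qq z" by (rule wp_near0[OF assms(2)])
    finally show "coeff P i * (z^(2*m) * wp Lam z ^ i) = coeff P i * z^(2*(m-i)) * (1 + z^2 * qq z)^i"
      by simp
  qed
  finally show ?thesis .
qed

lemma wp_cont: "z \<notin> Lam \<Longrightarrow> isCont (wp Lam) z"
  using wp_holo closed_Lam
  by (meson ComplI continuous_on_eq_continuous_at holomorphic_on_imp_continuous_on open_Compl)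

end

context two
begin

abbreviation "wA \<equiv> wp A.Lam"
abbreviation "wB \<equiv> wp B.Lam"

definition Bp :: "complex poly" where
  "Bp = (\<Prod>\<rho>\<in>Reps - B.Lam. [:- wB \<rho>, 1:]^2)"

lemma Bp_nz: "Bp \<noteq> 0"
  unfolding Bp_def by (subst prod_zero_iff) (auto simp: finite_Reps)

definition ff :: "complex \<Rightarrow> complex" where
  "ff z = poly Bp (wB z) * wA z"

definition fe :: "complex \<Rightarrow> complex" where
  "fe z = (if z \<in> A.Lam then Lim (at z) ff else ff z)"

lemma B_notin: "z \<notin> A.Lam \<Longrightarrow> z \<notin> B.Lam" using sub by blast

lemma ff_holo: "ff holomorphic_on (- A.Lam)"
proof -
  have "wB holomorphic_on (- A.Lam)" using B.wp_holo by (rule holomorphic_on_subset) (use sub in auto)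
  then show ?thesis unfolding ff_def[abs_def]
    by (intro holomorphic_intros holo_poly_comp A.wp_holo)
qed

lemma ff_loc:
  assumes om: "\<omega> \<in> A.Lam" "\<omega> \<notin> B.Lam"
  shows "\<exists>e>0. \<exists>H. H holomorphic_on ball \<omega> e \<and> (\<forall>z\<in>ball \<omega> e - {\<omega>}. z \<notin> A.Lam \<and> ff z = H z)"
proof -
  obtain \<rho> where \<rho>: "\<rho> \<in> Reps" "\<omega> - \<rho> \<in> B.Lam" using to_Reps[OF om(1)] by blast
  have \<rho>B: "\<rho> \<notin> B.Lam"
  proof
    assume "\<rho> \<in> B.Lam"
    then have "(\<omega> - \<rho>) + \<rho> \<in> B.Lam" by (rule B.Lam_add[OF \<rho>(2)])
    then show False using om(2) by simp
  qed
  have wBeq: "wB \<omega> = wB \<rho>"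
    using B.wp_per[OF \<rho>(2) \<rho>B] by simp
  define B' where "B' = (\<Prod>\<sigma>\<in>(Reps - B.Lam) - {\<rho>}. [:- wB \<sigma>, 1:]^2)"
  have BB': "Bp = [:- wB \<rho>, 1:]^2 * B'"
    unfolding Bp_def B'_def using \<rho>(1) \<rho>B finite_Reps by (subst prod.remove[of _ \<rho>]) auto
  obtain e1 where e1: "e1 > 0" "\<forall>y\<in>ball \<omega> e1. y \<noteq> \<omega> \<longrightarrow> y \<notin> A.Lam"
    using A.punct_ball by blast
  have "open (- B.Lam)" using B.closed_Lam by (simp add: open_Compl)
  then obtain e2 where e2: "e2 > 0" "ball \<omega> e2 \<subseteq> - B.Lam" using om(2) open_contains_ball by blast
  define e where "e = min e1 e2"
  have e: "e > 0" "ball \<omega> e \<subseteq> ball \<omega> e1" "ball \<omega> e \<subseteq> - B.Lam" using e1 e2 unfolding e_def by auto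
  define h where "h z = wB z - wB \<omega>" for z
  have hhol: "h holomorphic_on ball \<omega> e"
    unfolding h_def[abs_def] using B.wp_holo e(3) by (intro holomorphic_intros) (rule holomorphic_on_subset)
  define k where "k z = (if z = \<omega> then deriv h \<omega> else (h z - h \<omega>) / (z - \<omega>))" for z
  have khol: "k holomorphic_on ball \<omega> e"
    unfolding k_def[abs_def] by (rule pole_lemma[OF hhol]) (simp add: e(1))
  have hk: "h z = (z - \<omega>) * k z" if "z \<noteq> \<omega>" for z
    using that unfolding k_def h_def by simp
  have qsub: "(\<lambda>z. z - \<omega>) ` ball \<omega> e \<subseteq> - (A.Lam - {0})"
  proof
    fix y assume "y \<in> (\<lambda>z. z - \<omega>) ` ball \<omega> e"
    then obtain z where z: "z \<in> ball \<omega> e" "y = z - \<omega>" by blast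
    show "y \<in> - (A.Lam - {0})"
    proof (cases "z = \<omega>")
      case False
      then have "z \<notin> A.Lam" using e1(2) e(2) z(1) by blast
      then have "z - \<omega> \<notin> A.Lam" using om(1) A.Lam_add[of "z - \<omega>" \<omega>] by auto
      then show ?thesis using z(2) by simp
    qed (use z in simp)
  qed
  have qhol: "(\<lambda>z. A.qq (z - \<omega>)) holomorphic_on ball \<omega> e"
    using holomorphic_on_compose_gen[OF _ A.qq_holo qsub, unfolded o_def]
    by (simp add: holomorphic_intros)
  define H where "H z = k z ^ 2 * poly B' (wB z) * (1 + (z - \<omega>)^2 * A.qq (z - \<omega>))" for z
  have Hhol: "H holomorphic_on ball \<omega> e"
  proof -
    have "wB holomorphic_on ball \<omega> e" using B.wp_holo e(3) by (rule holomorphic_on_subset)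
    then show ?thesis unfolding H_def[abs_def] by (intro holomorphic_intros holo_poly_comp khol qhol)
  qed
  have "z \<notin> A.Lam \<and> ff z = H z" if z: "z \<in> ball \<omega> e - {\<omega>}" for z
  proof -
    have zn: "z \<noteq> \<omega>" and zb: "z \<in> ball \<omega> e" using z by auto
    have zA: "z \<notin> A.Lam" using e1(2) e(2) zb zn by blast
    have zwA: "z - \<omega> \<notin> A.Lam" using zA om(1) A.Lam_add[of "z - \<omega>" \<omega>] by auto
    have zw0: "z - \<omega> \<noteq> 0" using zn by simp
    have wa: "wA z = wA (z - \<omega>)" using A.wp_per[OF om(1) zwA] by simp
    have "poly Bp (wB z) = (wB z - wB \<rho>)^2 * poly B' (wB z)"
      unfolding BB' by (simp add: power2_eq_square algebra_simps)
    also have "wB z - wB \<rho> = (z - \<omega>) * k z" using hk[OF zn] unfolding h_def wBeq by simp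
    finally have "ff z = k z ^ 2 * poly B' (wB z) * ((z - \<omega>)^2 * wA (z - \<omega>))"
      unfolding ff_def wa by (simp add: power_mult_distrib mult_ac)
    also have "(z - \<omega>)^2 * wA (z - \<omega>) = 1 + (z - \<omega>)^2 * A.qq (z - \<omega>)" by (rule A.wp_near0[OF zw0])
    finally show ?thesis using zA unfolding H_def by simp
  qed
  then show ?thesis using e(1) Hhol by blast
qed

lemma fe_loc: "z0 \<notin> B.Lam \<Longrightarrow> \<exists>U. open U \<and> z0 \<in> U \<and> fe holomorphic_on U"
proof (cases "z0 \<in> A.Lam")
  case False
  have "fe holomorphic_on (- A.Lam)"
    by (rule holomorphic_transform[OF ff_holo]) (simp add: fe_def)
  moreover have "open (- A.Lam)" using A.closed_Lam by (simp add: open_Compl)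
  ultimately show ?thesis using False by blast
next
  case True
  assume zB: "z0 \<notin> B.Lam"
  obtain e H where eH: "e > 0" "H holomorphic_on ball z0 e"
    "\<And>z. z \<in> ball z0 e - {z0} \<Longrightarrow> z \<notin> A.Lam \<and> ff z = H z"
    using ff_loc[OF True zB] by blast
  have Hc: "isCont H z0"
    using eH(1,2) by (meson centre_in_ball continuous_on_eq_continuous_at holomorphic_on_imp_continuous_on open_ball)
  have ev: "eventually (\<lambda>z. ff z = H z) (at z0)"
    unfolding eventually_at using eH(1,3)
    by (intro exI[of _ e]) (auto simp: dist_commute)
  have "(ff \<longlongrightarrow> H z0) (at z0)"
    using Hc unfolding isCont_def by (rule tendsto_cong[THEN iffD2, rotated]) (rule ev)
  then have L: "Lim (at z0) ff = H z0" by (rule tendsto_Lim[rotated]) simp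
  have "fe holomorphic_on ball z0 e"
  proof (rule holomorphic_transform[OF eH(2)])
    fix z assume z: "z \<in> ball z0 e"
    show "H z = fe z"
    proof (cases "z = z0")
      case True then show ?thesis using L \<open>z0 \<in> A.Lam\<close> by (simp add: fe_def)
    next
      case False then show ?thesis using eH(3)[of z] z by (simp add: fe_def)
    qed
  qed
  then show ?thesis using eH(1) by (meson centre_in_ball open_ball)
qed

lemma fe_holo: "fe holomorphic_on (- B.Lam)"
  by (rule holo_local) (use B.closed_Lam fe_loc in \<open>auto simp: open_Compl\<close>)

lemma fe_cont: "z \<notin> B.Lam \<Longrightarrow> isCont fe z"
  using fe_holo B.closed_Lam
  by (meson ComplI continuous_on_eq_continuous_at holomorphic_on_imp_continuous_on open_Compl)

lemma fe_ff: "z \<notin> A.Lam \<Longrightarrow> fe z = ff z" by (simp add: fe_def)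

lemma ev_notA: "eventually (\<lambda>y. y \<notin> A.Lam) (at z)"
proof -
  obtain e where e: "e > 0" "\<forall>y\<in>ball z e. y \<noteq> z \<longrightarrow> y \<notin> A.Lam" using A.punct_ball by blast
  show ?thesis unfolding eventually_at using e by (intro exI[of _ e]) (auto simp: dist_commute)
qed

lemma fe_ell: "B.ell fe"
  unfolding B.ell_def
proof (intro conjI allI impI)
  show "fe holomorphic_on - B.Lam" by (rule fe_holo)
next
  fix z \<omega> assume z: "z \<notin> B.Lam" and om: "\<omega> \<in> B.Lam"
  have omA: "\<omega> \<in> A.Lam" using om sub by blast
  have base: "fe (y + \<omega>) = fe y" if y: "y \<notin> A.Lam" for y
  proof -
    have yw: "y + \<omega> \<notin> A.Lam" using y omA A.Lam_add_iff1 by blast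
    have "fe (y + \<omega>) = ff (y + \<omega>)" using yw by (rule fe_ff)
    also have "\<dots> = ff y" unfolding ff_def
      using B.wp_per[OF om B_notin[OF y]] A.wp_per[OF omA y] by simp
    also have "\<dots> = fe y" using y by (simp add: fe_ff)
    finally show ?thesis .
  qed
  show "fe (z + \<omega>) = fe z"
  proof (rule cont_eq_at[where f = "\<lambda>y. fe (y + \<omega>)"])
    have "z + \<omega> \<notin> B.Lam" using z om B.Lam_add_iff1 by blast
    then show "isCont (\<lambda>y. fe (y + \<omega>)) z"
      by (intro isCont_o2[OF _ fe_cont]) (auto intro: continuous_intros)
    show "isCont fe z" by (rule fe_cont[OF z])
    show "\<forall>\<^sub>F y in at z. fe (y + \<omega>) = fe y" using ev_notA[of z] by eventually_elim (rule base)
  qed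
next
  fix z assume z: "z \<notin> B.Lam"
  have base: "fe (- y) = fe y" if y: "y \<notin> A.Lam" for y
  proof -
    have yw: "- y \<notin> A.Lam" using y by simp
    have "fe (- y) = ff (- y)" using yw by (rule fe_ff)
    also have "\<dots> = ff y" unfolding ff_def using B.wp_even A.wp_even by simp
    also have "\<dots> = fe y" using y by (simp add: fe_ff)
    finally show ?thesis .
  qed
  show "fe (- z) = fe z"
  proof (rule cont_eq_at[where f = "\<lambda>y. fe (- y)"])
    have "- z \<notin> B.Lam" using z by simp
    then show "isCont (\<lambda>y. fe (- y)) z"
      by (intro isCont_o2[OF _ fe_cont]) (auto intro: continuous_intros)
    show "isCont fe z" by (rule fe_cont[OF z])
    show "\<forall>\<^sub>F y in at z. fe (- y) = fe y" using ev_notA[of z] by eventually_elim (rule base)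
  qed
qed

lemma fe_pole: "B.polebound (Suc (degree Bp)) fe"
proof -
  obtain d where d: "d > 0" "ball 0 d \<inter> A.Lam = {0}" using A.sep_ball by blast
  have dB: "ball 0 d \<inter> B.Lam = {0}" using d(2) sub B.Lam_0 by blast
  define m where "m = degree Bp"
  define g where "g z = (\<Sum>i\<le>m. coeff Bp i * z^(2*(m-i)) * (1 + z^2 * B.qq z)^i) * (1 + z^2 * A.qq z)" for z
  have ghol: "g holomorphic_on ball 0 d"
    unfolding g_def[abs_def]
    by (intro holomorphic_intros A.qq_holo_ball[OF d(2)] B.qq_holo_ball[OF dB])
  have "g z = z^(2 * Suc m) * fe z" if z: "z \<in> ball 0 d - {0}" for z
  proof -
    have z0: "z \<noteq> 0" and zb: "z \<in> ball 0 d" using z by auto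
    have zA: "z \<notin> A.Lam" by (rule A.notin_Lam_small[OF d(2) zb z0])
    have "z^(2 * Suc m) * fe z = (z^(2*m) * poly Bp (wB z)) * (z^2 * wA z)"
      unfolding fe_ff[OF zA] ff_def by (simp add: power_add mult_ac power2_eq_square)
    also have "\<dots> = g z"
      unfolding g_def B.polyexp[OF _ z0, of Bp m, unfolded m_def, simplified, folded m_def]
        A.wp_near0[OF z0] by simp
    finally show ?thesis by simp
  qed
  then show ?thesis unfolding B.polebound_def m_def using d(1) ghol by blast
qed

end


context two
begin

lemma rel0: "\<exists>A. \<forall>z. z \<notin> A.Lam \<longrightarrow> poly Bp (wB z) * wA z = poly A (wB z)"
proof -
  obtain A where A: "\<forall>z. z \<notin> B.Lam \<longrightarrow> fe z = poly A (wB z)"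
    using B.reduce[OF fe_ell fe_pole] by blast
  show ?thesis
  proof (intro exI[of _ A] allI impI)
    fix z assume z: "z \<notin> A.Lam"
    then have "fe z = poly A (wB z)" using A B_notin by blast
    then show "poly Bp (wB z) * wA z = poly A (wB z)" using z by (simp add: fe_ff ff_def)
  qed
qed

lemma connected_compA: "connected (- A.Lam)"
proof -
  have "path_connected (- A.Lam)"
    by (rule path_connected_complement_countable) (simp_all add: A.countable_Lam)
  then show ?thesis by (rule path_connected_imp_connected)
qed

lemma open_compA: "open (- A.Lam)" using A.closed_Lam by (simp add: open_Compl)

lemma wB_holoA: "wB holomorphic_on (- A.Lam)"
  using B.wp_holo by (rule holomorphic_on_subset) (use sub in auto)

lemma poly_wB_nz:
  assumes G: "G \<noteq> 0"
  shows "\<exists>z. z \<notin> A.Lam \<and> poly G (wB z) \<noteq> 0"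
proof -
  have "finite {u. poly G u = 0}" using G by (rule poly_roots_finite)
  then have "bounded {u. poly G u = 0}" by (rule finite_imp_bounded)
  then obtain M where M: "\<And>u. poly G u = 0 \<Longrightarrow> norm u \<le> M" unfolding bounded_iff by blast
  obtain d where d: "d > 0" "ball 0 d \<inter> A.Lam = {0}" using A.sep_ball by blast
  obtain z where z: "z \<noteq> 0" "norm z < d" "norm (wB z) > M" using B.wp_unbounded[OF d(1)] by blast
  have "z \<notin> A.Lam" by (rule A.notin_Lam_small[OF d(2)]) (use z in simp_all)
  moreover have "poly G (wB z) \<noteq> 0" using M[of "wB z"] z(3) by linarith
  ultimately show ?thesis by blast
qed

lemma cancel:
  assumes G0: "G \<noteq> 0"
    and prod0: "\<And>z. z \<notin> A.Lam \<Longrightarrow> poly G (wB z) * (poly B1 (wB z) * wA z - poly A1 (wB z)) = 0"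
  shows "\<And>z. z \<notin> A.Lam \<Longrightarrow> poly B1 (wB z) * wA z = poly A1 (wB z)"
proof -
  define Hf where "Hf z = poly B1 (wB z) * wA z - poly A1 (wB z)" for z
  define Gf where "Gf z = poly G (wB z)" for z
  have Gfhol: "Gf holomorphic_on (- A.Lam)" unfolding Gf_def[abs_def] by (rule holo_poly_comp[OF wB_holoA])
  have Hfhol: "Hf holomorphic_on (- A.Lam)"
    unfolding Hf_def[abs_def] by (intro holomorphic_intros holo_poly_comp wB_holoA A.wp_holo)
  have H0: "Hf z = 0" if z: "z \<notin> A.Lam" for z
  proof (rule ccontr)
    assume nz: "Hf z \<noteq> 0"
    have "isCont Hf z"
      using Hfhol open_compA z by (meson ComplI continuous_on_eq_continuous_at holomorphic_on_imp_continuous_on)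
    then obtain e1 where e1: "e1 > 0" "\<And>y. dist y z < e1 \<Longrightarrow> Hf y \<noteq> 0"
      using nz unfolding continuous_at_eps_delta
      by (metis dist_commute dist_self zero_less_dist_iff order_less_irrefl)
    obtain e2 where e2: "e2 > 0" "ball z e2 \<subseteq> - A.Lam" using open_compA z open_contains_ball by blast
    define e where "e = min e1 e2"
    have e: "e > 0" "ball z e \<subseteq> - A.Lam" using e1 e2 unfolding e_def by auto
    have Gz: "Gf y = 0" if y: "y \<in> ball z e" for y
    proof -
      have "dist y z < e1" using y unfolding e_def by (simp add: dist_commute)
      then have "Hf y \<noteq> 0" by (rule e1(2))
      moreover have "y \<notin> A.Lam" using y e(2) by blast
      ultimately show ?thesis using prod0[of y] unfolding Gf_def Hf_def by simp
    qed
    have all0: "Gf w = 0" if "w \<in> - A.Lam" for w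
    proof (rule analytic_continuation[OF Gfhol open_compA connected_compA e(2)])
      show "z \<in> - A.Lam" using z by simp
      show "z islimpt ball z e" using e(1) by (simp add: islimpt_ball)
      show "\<And>y. y \<in> ball z e \<Longrightarrow> Gf y = 0" by (rule Gz)
      show "w \<in> - A.Lam" by (rule that)
    qed
    obtain w where "w \<notin> A.Lam" "poly G (wB w) \<noteq> 0" using poly_wB_nz[OF G0] by blast
    then show False using all0[of w] unfolding Gf_def by simp
  qed
  fix z assume "z \<notin> A.Lam"
  then show "poly B1 (wB z) * wA z = poly A1 (wB z)" using H0 unfolding Hf_def by simp
qed

lemma rel_ind:
  "\<And>A B. B \<noteq> 0 \<Longrightarrow> degree B = n \<Longrightarrow> (\<And>z. z \<notin> A.Lam \<Longrightarrow> poly B (wB z) * wA z = poly A (wB z)) \<Longrightarrow>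
    \<exists>A1 B1. \<forall>z. z \<notin> A.Lam \<longrightarrow> poly B1 (wB z) \<noteq> 0 \<and> wA z = poly A1 (wB z) / poly B1 (wB z)"
proof (induction n rule: less_induct)
  case (less n)
  show ?case
  proof (cases "\<exists>u. poly B u = 0 \<and> poly A u = 0")
    case True
    then obtain u where u: "poly B u = 0" "poly A u = 0" by blast
    obtain B' where B': "B = [:- u, 1:] * B'" using u(1) by (auto simp: poly_eq_0_iff_dvd elim: dvdE)
    obtain A' where A': "A = [:- u, 1:] * A'" using u(2) by (auto simp: poly_eq_0_iff_dvd elim: dvdE)
    have B'0: "B' \<noteq> 0" using less.prems(1) B' by auto
    have "degree B = degree [:- u, 1:] + degree B'"
      unfolding B' by (rule degree_mult_eq) (simp_all add: B'0)
    then have dB: "degree B' < n" using less.prems(2) by simp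
    have G0: "[:- u, 1:] \<noteq> (0 :: complex poly)" by simp
    have rel': "poly B' (wB z) * wA z = poly A' (wB z)" if "z \<notin> A.Lam" for z
    proof (rule cancel[OF G0 _ that])
      fix y assume "y \<notin> A.Lam"
      then show "poly [:- u, 1:] (wB y) * (poly B' (wB y) * wA y - poly A' (wB y)) = 0"
        using less.prems(3)[of y] unfolding A' B' by (simp add: algebra_simps)
    qed
    show ?thesis by (rule less.IH[OF dB B'0 refl rel'])
  next
    case False
    have "poly B (wB z) \<noteq> 0 \<and> wA z = poly A (wB z) / poly B (wB z)" if z: "z \<notin> A.Lam" for z
    proof -
      have bnz: "poly B (wB z) \<noteq> 0"
      proof
        assume b: "poly B (wB z) = 0"
        then have "poly A (wB z) = 0" using less.prems(3)[OF z] by simp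
        then show False using False b by blast
      qed
      then show ?thesis using less.prems(3)[OF z] by (simp add: field_simps)
    qed
    then show ?thesis by blast
  qed
qed

lemma rel:
  "\<exists>A1 B1. \<forall>z. z \<notin> A.Lam \<longrightarrow> poly B1 (wB z) \<noteq> 0 \<and> wA z = poly A1 (wB z) / poly B1 (wB z)"
proof -
  obtain A where A: "\<forall>z. z \<notin> A.Lam \<longrightarrow> poly Bp (wB z) * wA z = poly A (wB z)" using rel0 by blast
  show ?thesis by (rule rel_ind[OF Bp_nz refl]) (use A in blast)
qed

end


lemma lin_dep:
  fixes v :: "'i \<Rightarrow> 'j \<Rightarrow> real"
  assumes "finite J"
  shows "finite I \<Longrightarrow> card J < card I \<Longrightarrow> \<exists>c. (\<exists>i\<in>I. c i \<noteq> 0) \<and> (\<forall>j\<in>J. (\<Sum>i\<in>I. c i * v i j) = 0)"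
  using assms
proof (induction J arbitrary: I v rule: finite_induct)
  case empty
  then obtain i0 where i0: "i0 \<in> I" by fastforce
  show ?case by (intro exI[of _ "\<lambda>i. if i = i0 then 1 else 0"]) (use i0 in auto)
next
  case (insert j0 J)
  have cJ: "card J < card I" using insert by simp
  show ?case
  proof (cases "\<forall>i\<in>I. v i j0 = 0")
    case True
    obtain c where c: "\<exists>i\<in>I. c i \<noteq> 0" "\<forall>j\<in>J. (\<Sum>i\<in>I. c i * v i j) = 0"
      using insert.IH[OF insert.prems(1) cJ] by blast
    have "(\<Sum>i\<in>I. c i * v i j0) = 0" using True by simp
    then show ?thesis using c by (intro exI[of _ c]) auto
  next
    case False
    then obtain i0 where i0: "i0 \<in> I" "v i0 j0 \<noteq> 0" by blast
    define I' where "I' = I - {i0}"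
    have fI': "finite I'" using insert.prems(1) unfolding I'_def by simp
    have cI': "card J < card I'" unfolding I'_def using insert.prems insert.hyps i0(1) by simp
    define w where "w i j = v i j - (v i j0 / v i0 j0) * v i0 j" for i j
    obtain c' where c': "\<exists>i\<in>I'. c' i \<noteq> 0" "\<forall>j\<in>J. (\<Sum>i\<in>I'. c' i * w i j) = 0"
      using insert.IH[OF fI' cI', of w] by blast
    define s where "s = (\<Sum>i\<in>I'. c' i * v i j0)"
    define c where "c i = (if i = i0 then - s / v i0 j0 else c' i)" for i
    have split: "(\<Sum>i\<in>I. c i * v i j) = c i0 * v i0 j + (\<Sum>i\<in>I'. c' i * v i j)" for j
    proof -
      have "I = insert i0 I'" using i0(1) unfolding I'_def by auto
      moreover have "i0 \<notin> I'" unfolding I'_def by simp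
      ultimately have "(\<Sum>i\<in>I. c i * v i j) = c i0 * v i0 j + (\<Sum>i\<in>I'. c i * v i j)"
        using fI' by simp
      also have "(\<Sum>i\<in>I'. c i * v i j) = (\<Sum>i\<in>I'. c' i * v i j)"
        by (rule sum.cong) (auto simp: c_def I'_def)
      finally show ?thesis .
    qed
    have "\<forall>j\<in>insert j0 J. (\<Sum>i\<in>I. c i * v i j) = 0"
    proof
      fix j assume j: "j \<in> insert j0 J"
      show "(\<Sum>i\<in>I. c i * v i j) = 0"
      proof (cases "j = j0")
        case True
        then show ?thesis unfolding split using i0(2) by (simp add: c_def s_def)
      next
        case False
        then have jJ: "j \<in> J" using j by simp
        have "0 = (\<Sum>i\<in>I'. c' i * w i j)" using c'(2) jJ by simp
        also have "\<dots> = (\<Sum>i\<in>I'. c' i * v i j - (c' i * v i j0) * (v i0 j / v i0 j0))"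
          unfolding w_def by (intro sum.cong) (simp_all add: algebra_simps)
        also have "\<dots> = (\<Sum>i\<in>I'. c' i * v i j) - (\<Sum>i\<in>I'. c' i * v i j0) * (v i0 j / v i0 j0)"
          by (simp only: sum_subtractf sum_distrib_right)
        also have "\<dots> = (\<Sum>i\<in>I'. c' i * v i j) - s / v i0 j0 * v i0 j"
          by (simp add: s_def)
        also have "\<dots> = (\<Sum>i\<in>I. c i * v i j)" unfolding split by (simp add: c_def)
        finally show ?thesis by simp
      qed
    qed
    moreover have "\<exists>i\<in>I. c i \<noteq> 0"
    proof -
      obtain i where i: "i \<in> I'" "c' i \<noteq> 0" using c'(1) by blast
      then have "i \<in> I" "c i = c' i" unfolding I'_def c_def by auto
      then show ?thesis using i(2) by metis
    qed
    ultimately show ?thesis by blast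
  qed
qed

definition ev2 :: "real poly poly \<Rightarrow> real \<Rightarrow> real \<Rightarrow> real" where
  "ev2 p x y = poly (poly p [:y:]) x"

lemma eval2_ev2: "eval2 p (x, y) = ev2 p x y"
  unfolding eval2_def ev2_def
proof (induction p rule: pCons_induct)
  case (pCons a p)
  have "map_poly (\<lambda>c. poly c x) (pCons a p) = pCons (poly a x) (map_poly (\<lambda>c. poly c x) p)"
    by (rule map_poly_pCons) simp
  then show ?case using pCons.IH by simp
qed simp

lemma ev2_simps[simp]:
  "ev2 (p + q) x y = ev2 p x y + ev2 q x y"
  "ev2 (p - q) x y = ev2 p x y - ev2 q x y"
  "ev2 (p * q) x y = ev2 p x y * ev2 q x y"
  "ev2 (p ^ n) x y = ev2 p x y ^ n"
  "ev2 0 x y = 0"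
  "ev2 1 x y = 1"
  unfolding ev2_def by simp_all

lemma ev2_sum: "ev2 (sum f A) x y = (\<Sum>a\<in>A. ev2 (f a) x y)"
  unfolding ev2_def by (simp add: poly_sum)

definition C2 :: "real \<Rightarrow> real poly poly" where "C2 c = [:[:c:]:]"
definition Mo :: "nat \<Rightarrow> nat \<Rightarrow> real poly poly" where "Mo i j = monom (monom 1 i) j"

lemma ev2_C2[simp]: "ev2 (C2 c) x y = c" unfolding ev2_def C2_def by simp
lemma ev2_Mo[simp]: "ev2 (Mo i j) x y = x^i * y^j" unfolding ev2_def Mo_def by (simp add: poly_monom)

definition cf :: "real poly poly \<Rightarrow> nat \<times> nat \<Rightarrow> real" where
  "cf p ij = coeff (coeff p (snd ij)) (fst ij)"

lemma cf_add[simp]: "cf (p + q) ij = cf p ij + cf q ij" unfolding cf_def by simp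
lemma cf_sum: "cf (sum f A) ij = (\<Sum>a\<in>A. cf (f a) ij)"
  unfolding cf_def by (simp add: coeff_sum)
lemma cf_C2_mult[simp]: "cf (C2 c * p) ij = c * cf p ij"
  unfolding cf_def C2_def by simp
lemma cf_Mo[simp]: "cf (Mo i j) ij = (if ij = (i, j) then 1 else 0)"
  unfolding cf_def Mo_def by (cases ij) auto

definition bd2 :: "nat \<Rightarrow> nat \<Rightarrow> real poly poly \<Rightarrow> bool" where
  "bd2 a b p \<longleftrightarrow> degree p \<le> b \<and> (\<forall>j. degree (coeff p j) \<le> a)"

lemma bd2_mono: "bd2 a b p \<Longrightarrow> a \<le> a' \<Longrightarrow> b \<le> b' \<Longrightarrow> bd2 a' b' p"
  unfolding bd2_def by (meson order_trans)

lemma bd2_add: "bd2 a b p \<Longrightarrow> bd2 a b q \<Longrightarrow> bd2 a b (p + q)"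
  unfolding bd2_def by (auto intro: degree_add_le)

lemma bd2_diff: "bd2 a b p \<Longrightarrow> bd2 a b q \<Longrightarrow> bd2 a b (p - q)"
  unfolding bd2_def by (auto intro: degree_diff_le)

lemma bd2_sum: "finite A \<Longrightarrow> (\<And>x. x \<in> A \<Longrightarrow> bd2 a b (f x)) \<Longrightarrow> bd2 a b (sum f A)"
  unfolding bd2_def by (auto intro: degree_sum_le simp: coeff_sum)

lemma bd2_mult:
  assumes "bd2 a b p" "bd2 a' b' q"
  shows "bd2 (a + a') (b + b') (p * q)"
  unfolding bd2_def
proof (intro conjI allI)
  show "degree (p * q) \<le> b + b'"
    using assms unfolding bd2_def by (meson add_mono degree_mult_le order_trans)
  fix n
  show "degree (coeff (p * q) n) \<le> a + a'"
    unfolding coeff_mult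
  proof (rule degree_sum_le)
    fix i
    show "degree (coeff p i * coeff q (n - i)) \<le> a + a'"
      using assms unfolding bd2_def by (meson add_mono degree_mult_le order_trans)
  qed simp
qed

lemma bd2_power: "bd2 a b p \<Longrightarrow> bd2 (k * a) (k * b) (p ^ k)"
proof (induction k)
  case 0 then show ?case by (simp add: bd2_def coeff_1)
next
  case (Suc k)
  then have "bd2 (a + k * a) (b + k * b) (p * p ^ k)" by (intro bd2_mult) auto
  then show ?case by simp
qed

lemma bd2_C2: "bd2 0 0 (C2 c)" unfolding bd2_def C2_def by (simp add: coeff_pCons split: nat.splits)

lemma bd2_Mo: "bd2 i j (Mo i j)" unfolding bd2_def Mo_def by (auto intro: degree_monom_le)

lemma bd2_C2_mult: "bd2 a b p \<Longrightarrow> bd2 a b (C2 c * p)"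
  using bd2_mult[OF bd2_C2] by simp

lemma bd2_zero_cf:
  assumes "bd2 a b p" "\<And>i j. i \<le> a \<Longrightarrow> j \<le> b \<Longrightarrow> cf p (i, j) = 0"
  shows "p = 0"
proof (rule poly_eqI)
  fix j
  show "coeff p j = coeff 0 j"
  proof (cases "j \<le> b")
    case False
    then have "j > degree p" using assms(1) unfolding bd2_def by simp
    then show ?thesis by (simp add: coeff_eq_0)
  next
    case True
    show ?thesis
    proof (simp, rule poly_eqI)
      fix i
      show "coeff (coeff p j) i = coeff 0 i"
      proof (cases "i \<le> a")
        case False
        then have "i > degree (coeff p j)" using assms(1) unfolding bd2_def by (meson le_trans not_le)
        then show ?thesis by (simp add: coeff_eq_0)
      next
        case True
        then show ?thesis using assms(2)[of i j] \<open>j \<le> b\<close> by (simp add: cf_def)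
      qed
    qed
  qed
qed

lemma bd2_exists: "\<exists>e. bd2 e e p"
proof -
  define e where "e = degree p + (\<Sum>j\<le>degree p. degree (coeff p j))"
  have "degree (coeff p j) \<le> e" for j
  proof (cases "j \<le> degree p")
    case True
    then have "degree (coeff p j) \<le> (\<Sum>j\<le>degree p. degree (coeff p j))"
      by (intro member_le_sum) auto
    then show ?thesis unfolding e_def by simp
  next
    case False then show ?thesis by (simp add: coeff_eq_0)
  qed
  moreover have "degree p \<le> e" unfolding e_def by simp
  ultimately show ?thesis unfolding bd2_def by blast
qed


lemma term_eq:
  fixes p1 p2 q :: real
  assumes "i + j \<le> n" "q \<noteq> 0"
  shows "p1^i * p2^j * q^(n - i - j) = q^n * ((p1/q)^i * (p2/q)^j)"
proof -
  have "q^n = q^i * q^j * q^(n - i - j)"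
    using assms(1) by (simp flip: power_add)
  then show ?thesis using assms(2) by (simp add: power_divide field_simps)
qed

lemma card_ineq:
  fixes d e N :: nat
  assumes "N = 4*d*e + 2*e + e*e + 1"
  shows "(2*d*N + e + 1)^2 < (N+1)^2 + (2*d*N + 1)^2"
proof -
  have h1: "N * (4*d*e + 1) \<le> N * N" by (rule mult_le_mono2) (simp add: assms)
  have h2: "2*e + e*e + 1 \<le> N" by (simp add: assms)
  have "(2*d*N + e + 1)^2 = (2*d*N + 1)^2 + (4*d*e*N + 2*e + e*e)"
    by (simp add: power2_eq_square algebra_simps)
  moreover have "4*d*e*N + 2*e + e*e < (N+1)^2"
  proof -
    have "4*d*e*N + 2*e + e*e < 4*d*e*N + N" using h2 by simp
    also have "\<dots> = N * (4*d*e + 1)" by (simp add: algebra_simps)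
    also have "\<dots> \<le> N * N" by (rule h1)
    also have "\<dots> < (N+1)^2" by (simp add: power2_eq_square)
    finally show ?thesis .
  qed
  ultimately show ?thesis by simp
qed

lemma elim:
  assumes b1: "bd2 d d P1" and b2: "bd2 d d P2" and b3: "bd2 d d Q" and bg: "bd2 e e g" and g0: "g \<noteq> 0"
  shows "\<exists>H. H \<noteq> 0 \<and> (\<forall>x y. ev2 g x y = 0 \<longrightarrow> ev2 Q x y \<noteq> 0 \<longrightarrow>
            ev2 H (ev2 P1 x y / ev2 Q x y) (ev2 P2 x y / ev2 Q x y) = 0)"
proof -
  define N where "N = 4*d*e + 2*e + e*e + 1"
  define M where "M = 2*d*N + e"
  define I1 where "I1 = {..N} \<times> {..N}"
  define I2 where "I2 = {..2*d*N} \<times> {..2*d*N}"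
  define I where "I = I1 <+> I2"
  define J where "J = {..M} \<times> {..M}"
  define V where "V = case_sum (\<lambda>p. P1^(fst p) * P2^(snd p) * Q^(2*N - fst p - snd p))
                               (\<lambda>p. g * Mo (fst p) (snd p))"
  have fI: "finite I" unfolding I_def I1_def I2_def by simp
  have fJ: "finite J" unfolding J_def by simp
  have cI: "card J < card I"
  proof -
    have "card I = (N+1)^2 + (2*d*N+1)^2"
      unfolding I_def I1_def I2_def by (simp add: card_Plus card_cartesian_product power2_eq_square)
    moreover have "card J = (2*d*N + e + 1)^2"
      unfolding J_def M_def by (simp add: card_cartesian_product power2_eq_square)
    ultimately show ?thesis using card_ineq[OF N_def] by simp
  qed
  obtain c where c: "\<exists>i\<in>I. c i \<noteq> 0" "\<forall>j\<in>J. (\<Sum>i\<in>I. c i * cf (V i) j) = 0"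
    using lin_dep[OF fJ fI cI, of "\<lambda>i j. cf (V i) j"] by blast
  define S where "S = (\<Sum>i\<in>I. C2 (c i) * V i)"
  have bdV: "bd2 M M (V i)" if "i \<in> I" for i
  proof (cases i)
    case (Inl p)
    then have p: "fst p \<le> N" "snd p \<le> N" using that unfolding I_def I1_def by auto
    have "bd2 (fst p * d + snd p * d + (2*N - fst p - snd p) * d) (fst p * d + snd p * d + (2*N - fst p - snd p) * d)
        (P1^(fst p) * P2^(snd p) * Q^(2*N - fst p - snd p))"
      by (intro bd2_mult bd2_power b1 b2 b3)
    moreover have "fst p * d + snd p * d + (2*N - fst p - snd p) * d = 2*N*d"
    proof -
      have "fst p + snd p + (2*N - fst p - snd p) = 2*N" using p by simp
      then have "(fst p + snd p + (2*N - fst p - snd p)) * d = 2*N*d" by simp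
      then show ?thesis by (simp add: algebra_simps)
    qed
    ultimately have "bd2 (2*N*d) (2*N*d) (V i)" using Inl by (simp add: V_def)
    then show ?thesis by (rule bd2_mono) (simp_all add: M_def)
  next
    case (Inr p)
    then have p: "fst p \<le> 2*d*N" "snd p \<le> 2*d*N" using that unfolding I_def I2_def by auto
    have "bd2 (e + fst p) (e + snd p) (g * Mo (fst p) (snd p))" by (intro bd2_mult bg bd2_Mo)
    then have "bd2 (e + fst p) (e + snd p) (V i)" using Inr by (simp add: V_def)
    then show ?thesis by (rule bd2_mono) (use p in \<open>simp_all add: M_def\<close>)
  qed
  have S0: "S = 0"
  proof (rule bd2_zero_cf)
    show "bd2 M M S" unfolding S_def using fI bdV by (intro bd2_sum bd2_C2_mult) auto
    fix a b assume "a \<le> M" "b \<le> M"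
    then have "(a, b) \<in> J" unfolding J_def by simp
    then show "cf S (a, b) = 0" using c(2) unfolding S_def cf_sum by simp
  qed
  define K where "K = (\<Sum>p\<in>I2. C2 (c (Inr p)) * Mo (fst p) (snd p))"
  define Hh where "Hh = (\<Sum>p\<in>I1. C2 (c (Inl p)) * (P1^(fst p) * P2^(snd p) * Q^(2*N - fst p - snd p)))"
  have SHK: "S = Hh + g * K"
  proof -
    have "S = (\<Sum>p\<in>I1. C2 (c (Inl p)) * V (Inl p)) + (\<Sum>p\<in>I2. C2 (c (Inr p)) * V (Inr p))"
      unfolding S_def I_def by (subst sum.Plus) (simp_all add: I1_def I2_def o_def)
    also have "\<dots> = Hh + g * K"
      unfolding Hh_def K_def V_def by (simp add: sum_distrib_left mult_ac)
    finally show ?thesis .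
  qed
  have cfK: "cf K p = c (Inr p)" if "p \<in> I2" for p
  proof -
    have "cf K p = (\<Sum>q\<in>I2. c (Inr q) * (if p = (fst q, snd q) then 1 else 0))"
      unfolding K_def cf_sum by simp
    also have "\<dots> = (\<Sum>q\<in>I2. if q = p then c (Inr q) else 0)"
      by (rule sum.cong) auto
    also have "\<dots> = c (Inr p)" using that unfolding I2_def by simp
    finally show ?thesis .
  qed
  obtain p0 where p0: "p0 \<in> I1" "c (Inl p0) \<noteq> 0"
  proof (rule ccontr)
    assume "\<not> thesis"
    then have z: "\<forall>p\<in>I1. c (Inl p) = 0" using that by blast
    then have "Hh = 0" unfolding Hh_def by (simp add: C2_def)
    then have "g * K = 0" using S0 SHK by simp
    then have "K = 0" using g0 by simp
    then have "\<forall>p\<in>I2. c (Inr p) = 0" using cfK by (simp add: cf_def)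
    then show False using c(1) z unfolding I_def by auto
  qed
  define H where "H = (\<Sum>p\<in>I1. C2 (c (Inl p)) * Mo (fst p) (snd p))"
  have "cf H p0 = c (Inl p0)"
  proof -
    have "cf H p0 = (\<Sum>q\<in>I1. c (Inl q) * (if p0 = (fst q, snd q) then 1 else 0))"
      unfolding H_def cf_sum by simp
    also have "\<dots> = (\<Sum>q\<in>I1. if q = p0 then c (Inl q) else 0)"
      by (rule sum.cong) auto
    also have "\<dots> = c (Inl p0)" using p0(1) unfolding I1_def by simp
    finally show ?thesis .
  qed
  then have H0: "H \<noteq> 0" using p0(2) by (auto simp: cf_def)
  have "ev2 H (ev2 P1 x y / ev2 Q x y) (ev2 P2 x y / ev2 Q x y) = 0"
    if gz: "ev2 g x y = 0" and qz: "ev2 Q x y \<noteq> 0" for x y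
  proof -
    define p1 where "p1 = ev2 P1 x y"
    define p2 where "p2 = ev2 P2 x y"
    define q where "q = ev2 Q x y"
    have q0: "q \<noteq> 0" using qz unfolding q_def .
    have "0 = ev2 S x y" using S0 by simp
    also have "\<dots> = ev2 Hh x y" unfolding SHK using gz by simp
    also have "\<dots> = (\<Sum>p\<in>I1. c (Inl p) * (p1^(fst p) * p2^(snd p) * q^(2*N - fst p - snd p)))"
      unfolding Hh_def ev2_sum p1_def p2_def q_def by simp
    also have "\<dots> = (\<Sum>p\<in>I1. c (Inl p) * (q^(2*N) * ((p1/q)^(fst p) * (p2/q)^(snd p))))"
    proof (rule sum.cong[OF refl])
      fix p assume "p \<in> I1"
      then have "fst p + snd p \<le> 2*N" unfolding I1_def by auto
      then show "c (Inl p) * (p1^(fst p) * p2^(snd p) * q^(2*N - fst p - snd p))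
          = c (Inl p) * (q^(2*N) * ((p1/q)^(fst p) * (p2/q)^(snd p)))"
        using term_eq[OF _ q0] by simp
    qed
    also have "\<dots> = q^(2*N) * ev2 H (p1/q) (p2/q)"
      unfolding H_def ev2_sum by (simp add: sum_distrib_left mult_ac)
    finally have "q^(2*N) * ev2 H (p1/q) (p2/q) = 0" by simp
    then show ?thesis using q0 unfolding p1_def p2_def q_def by simp
  qed
  then show ?thesis using H0 by blast
qed

fun cpow :: "nat \<Rightarrow> real poly poly \<times> real poly poly" where
  "cpow 0 = (1, 0)"
| "cpow (Suc k) = (Mo 1 0 * fst (cpow k) - Mo 0 1 * snd (cpow k), Mo 1 0 * snd (cpow k) + Mo 0 1 * fst (cpow k))"

lemma cpow_ev: "ev2 (fst (cpow k)) x y = Re (Complex x y ^ k) \<and> ev2 (snd (cpow k)) x y = Im (Complex x y ^ k)"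
  by (induction k) simp_all

lemma cpow_bd: "bd2 k k (fst (cpow k)) \<and> bd2 k k (snd (cpow k))"
proof (induction k)
  case 0 then show ?case by (simp add: bd2_def coeff_1)
next
  case (Suc k)
  have a: "bd2 (1 + k) (0 + k) (Mo 1 0 * fst (cpow k))" "bd2 (0 + k) (1 + k) (Mo 0 1 * snd (cpow k))"
    "bd2 (1 + k) (0 + k) (Mo 1 0 * snd (cpow k))" "bd2 (0 + k) (1 + k) (Mo 0 1 * fst (cpow k))"
    using bd2_mult[OF bd2_Mo[of 1 0] conjunct1[OF Suc.IH]] bd2_mult[OF bd2_Mo[of 0 1] conjunct2[OF Suc.IH]]
      bd2_mult[OF bd2_Mo[of 1 0] conjunct2[OF Suc.IH]] bd2_mult[OF bd2_Mo[of 0 1] conjunct1[OF Suc.IH]]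
    by simp_all
  then have "bd2 (Suc k) (Suc k) (Mo 1 0 * fst (cpow k))" "bd2 (Suc k) (Suc k) (Mo 0 1 * snd (cpow k))"
    "bd2 (Suc k) (Suc k) (Mo 1 0 * snd (cpow k))" "bd2 (Suc k) (Suc k) (Mo 0 1 * fst (cpow k))"
    by (auto elim: bd2_mono)
  then show ?case by (simp add: bd2_add bd2_diff)
qed

definition ReP :: "complex poly \<Rightarrow> real poly poly" where
  "ReP P = (\<Sum>k\<le>degree P. C2 (Re (coeff P k)) * fst (cpow k) - C2 (Im (coeff P k)) * snd (cpow k))"

definition ImP :: "complex poly \<Rightarrow> real poly poly" where
  "ImP P = (\<Sum>k\<le>degree P. C2 (Re (coeff P k)) * snd (cpow k) + C2 (Im (coeff P k)) * fst (cpow k))"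

lemma ReP_ev: "ev2 (ReP P) x y = Re (poly P (Complex x y))"
  unfolding ReP_def ev2_sum poly_altdef by (simp add: cpow_ev Re_sum)

lemma ImP_ev: "ev2 (ImP P) x y = Im (poly P (Complex x y))"
  unfolding ImP_def ev2_sum poly_altdef by (simp add: cpow_ev Im_sum)

lemma ReP_bd: "bd2 (degree P) (degree P) (ReP P)"
  unfolding ReP_def
proof (rule bd2_sum)
  fix k assume "k \<in> {..degree P}"
  then have k: "k \<le> degree P" by simp
  have "bd2 k k (C2 (Re (coeff P k)) * fst (cpow k))" "bd2 k k (C2 (Im (coeff P k)) * snd (cpow k))"
    using cpow_bd by (auto intro: bd2_C2_mult)
  then show "bd2 (degree P) (degree P) (C2 (Re (coeff P k)) * fst (cpow k) - C2 (Im (coeff P k)) * snd (cpow k))"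
    using k by (auto intro: bd2_diff elim: bd2_mono)
qed simp

lemma ImP_bd: "bd2 (degree P) (degree P) (ImP P)"
  unfolding ImP_def
proof (rule bd2_sum)
  fix k assume "k \<in> {..degree P}"
  then have k: "k \<le> degree P" by simp
  have "bd2 k k (C2 (Re (coeff P k)) * snd (cpow k))" "bd2 k k (C2 (Im (coeff P k)) * fst (cpow k))"
    using cpow_bd by (auto intro: bd2_C2_mult)
  then show "bd2 (degree P) (degree P) (C2 (Re (coeff P k)) * snd (cpow k) + C2 (Im (coeff P k)) * fst (cpow k))"
    using k by (auto intro: bd2_add elim: bd2_mono)
qed simp

lemma rational_elim:
  fixes A1 B1 :: "complex poly" and g :: "real poly poly"
  assumes g0: "g \<noteq> 0"
  shows "\<exists>H. H \<noteq> 0 \<and> (\<forall>u. ev2 g (Re u) (Im u) = 0 \<longrightarrow> poly B1 u \<noteq> 0 \<longrightarrow>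
            ev2 H (Re (poly A1 u / poly B1 u)) (Im (poly A1 u / poly B1 u)) = 0)"
proof -
  obtain e where e: "bd2 e e g" using bd2_exists by blast
  define m where "m = max (degree A1) (degree B1)"
  define RA where "RA = ReP A1"
  define IA where "IA = ImP A1"
  define RB where "RB = ReP B1"
  define IB where "IB = ImP B1"
  have bA: "bd2 m m RA" "bd2 m m IA" unfolding RA_def IA_def m_def
    by (rule bd2_mono[OF ReP_bd], simp_all, rule bd2_mono[OF ImP_bd], simp_all)
  have bB: "bd2 m m RB" "bd2 m m IB" unfolding RB_def IB_def m_def
    by (rule bd2_mono[OF ReP_bd], simp_all, rule bd2_mono[OF ImP_bd], simp_all)
  define P1 where "P1 = RA * RB + IA * IB"
  define P2 where "P2 = IA * RB - RA * IB"
  define Q where "Q = RB * RB + IB * IB"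
  have b1: "bd2 (m + m) (m + m) P1" unfolding P1_def using bA bB by (intro bd2_add bd2_mult)
  have b2: "bd2 (m + m) (m + m) P2" unfolding P2_def using bA bB by (intro bd2_diff bd2_mult)
  have b3: "bd2 (m + m) (m + m) Q" unfolding Q_def using bA bB by (intro bd2_add bd2_mult)
  obtain H where H: "H \<noteq> 0" "\<And>x y. ev2 g x y = 0 \<Longrightarrow> ev2 Q x y \<noteq> 0 \<Longrightarrow>
            ev2 H (ev2 P1 x y / ev2 Q x y) (ev2 P2 x y / ev2 Q x y) = 0"
    using elim[OF b1 b2 b3 e g0] by blast
  have "ev2 H (Re (poly A1 u / poly B1 u)) (Im (poly A1 u / poly B1 u)) = 0"
    if gu: "ev2 g (Re u) (Im u) = 0" and bu: "poly B1 u \<noteq> 0" for u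
  proof -
    define a where "a = poly A1 u"
    define b where "b = poly B1 u"
    have uc: "Complex (Re u) (Im u) = u" by simp
    have ev: "ev2 RA (Re u) (Im u) = Re a" "ev2 IA (Re u) (Im u) = Im a"
      "ev2 RB (Re u) (Im u) = Re b" "ev2 IB (Re u) (Im u) = Im b"
      unfolding RA_def IA_def RB_def IB_def a_def b_def ReP_ev ImP_ev uc by simp_all
    have q: "ev2 Q (Re u) (Im u) = (Re b)^2 + (Im b)^2" unfolding Q_def using ev by (simp add: power2_eq_square)
    have b0: "b \<noteq> 0" using bu unfolding b_def .
    have qn: "(Re b)^2 + (Im b)^2 \<noteq> 0" using b0 by (simp add: complex_eq_iff)
    have r1: "ev2 P1 (Re u) (Im u) / ev2 Q (Re u) (Im u) = Re (a / b)"
      unfolding P1_def q using ev by (simp add: Re_divide power2_eq_square)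
    have r2: "ev2 P2 (Re u) (Im u) / ev2 Q (Re u) (Im u) = Im (a / b)"
      unfolding P2_def q using ev by (simp add: Im_divide power2_eq_square)
    have "ev2 Q (Re u) (Im u) \<noteq> 0" using q qn by simp
    from H(2)[OF gu this] show ?thesis unfolding r1 r2 a_def b_def .
  qed
  then show ?thesis using H(1) by blast
qed


theorem lemma2p8p3:
  fixes L L' :: "complex set" and S :: "(real \<times> real) set"
  assumes "is_lattice L" and "is_lattice L'" and "L' \<subseteq> L"
    and "weakly_bialgebraic L' S"
  shows "weakly_bialgebraic L S"
proof -
  obtain w1 w2 where w: "w1 \<noteq> 0" "Im (w2 / w1) \<noteq> 0"
    "L = {of_int m * w1 + of_int n * w2 | m n :: int. True}"
    using assms(1) unfolding is_lattice_def by blast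
  obtain v1 v2 where v: "v1 \<noteq> 0" "Im (v2 / v1) \<noteq> 0"
    "L' = {of_int m * v1 + of_int n * v2 | m n :: int. True}"
    using assms(2) unfolding is_lattice_def by blast
  interpret A: lat w1 w2 by unfold_locales (use w in auto)
  interpret B: lat v1 v2 by unfold_locales (use v in auto)
  have LA: "L = A.Lam" unfolding A.Lam_def w(3) ..
  have LB: "L' = B.Lam" unfolding B.Lam_def v(3) ..
  interpret T: two w1 w2 v1 v2 by unfold_locales (use assms(3) LA LB in auto)
  obtain A1 B1 where AB0: "\<forall>z. z \<notin> A.Lam \<longrightarrow> poly B1 (wp B.Lam z) \<noteq> 0 \<and>
      wp A.Lam z = poly A1 (wp B.Lam z) / poly B1 (wp B.Lam z)"
    using T.rel by (elim exE) (rule that)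
  have AB: "poly B1 (wp L' z) \<noteq> 0 \<and> wp L z = poly A1 (wp L' z) / poly B1 (wp L' z)" if "z \<notin> L" for z
    using AB0 that unfolding LA LB by blast
  have wb: "S \<noteq> {} \<and> S \<noteq> UNIV \<and>
     (\<exists>F G. finite F \<and> finite G \<and> S = zero_set F \<and> (\<exists>g\<in>G. g \<noteq> 0) \<and>
        PL L' ` (S - lattice_pts L') \<subseteq> zero_set G) \<and>
     \<not> (\<exists>F1 F2. finite F1 \<and> finite F2 \<and> zero_set F1 \<subset> S \<and> zero_set F2 \<subset> S \<and>
            S = zero_set F1 \<union> zero_set F2)"
    using assms(4) unfolding weakly_bialgebraic_def .
  have rest: "S \<noteq> {}" "S \<noteq> UNIV"
      "\<not> (\<exists>F1 F2. finite F1 \<and> finite F2 \<and> zero_set F1 \<subset> S \<and> zero_set F2 \<subset> S \<and>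
            S = zero_set F1 \<union> zero_set F2)"
    using wb by (blast, blast, blast)
  obtain F G where FG: "finite F" "finite G" "S = zero_set F" "\<exists>g\<in>G. g \<noteq> 0"
    "PL L' ` (S - lattice_pts L') \<subseteq> zero_set G"
    using wb by (elim conjE exE) (rule that)
  obtain g where g: "g \<in> G" "g \<noteq> 0" using FG(4) by blast
  obtain H where H: "H \<noteq> 0" "\<And>u. ev2 g (Re u) (Im u) = 0 \<Longrightarrow> poly B1 u \<noteq> 0 \<Longrightarrow>
            ev2 H (Re (poly A1 u / poly B1 u)) (Im (poly A1 u / poly B1 u)) = 0"
    using rational_elim[OF g(2), of B1 A1] by blast
  have incl: "PL L ` (S - lattice_pts L) \<subseteq> zero_set {H}"
  proof
    fix r assume "r \<in> PL L ` (S - lattice_pts L)"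
    then obtain p where p: "p \<in> S" "p \<notin> lattice_pts L" "r = PL L p" by blast
    define z where "z = Complex (fst p) (snd p)"
    have zL: "z \<notin> L" using p(2) unfolding lattice_pts_def z_def by simp
    have pL': "p \<notin> lattice_pts L'" using p(2) assms(3) unfolding lattice_pts_def by auto
    have "PL L' p \<in> zero_set G" using FG(5) p(1) pL' by blast
    then have "eval2 g (PL L' p) = 0" using g(1) unfolding zero_set_def by blast
    then have gz: "ev2 g (Re (wp L' z)) (Im (wp L' z)) = 0"
      unfolding PL_def z_def eval2_ev2 by simp
    have b: "poly B1 (wp L' z) \<noteq> 0" and weq: "wp L z = poly A1 (wp L' z) / poly B1 (wp L' z)"
      using AB[OF zL] by auto
    have "ev2 H (Re (wp L z)) (Im (wp L z)) = 0" unfolding weq by (rule H(2)[OF gz b])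
    then have "eval2 H (PL L p) = 0" unfolding PL_def z_def[symmetric] eval2_ev2 by simp
    then show "r \<in> zero_set {H}" using p(3) unfolding zero_set_def by simp
  qed
  have fH: "finite {H}" by simp
  have nH: "\<exists>h\<in>{H}. h \<noteq> 0" using H(1) by simp
  have ex: "\<exists>F G. finite F \<and> finite G \<and> S = zero_set F \<and> (\<exists>g\<in>G. g \<noteq> 0) \<and>
        PL L ` (S - lattice_pts L) \<subseteq> zero_set G"
    using FG(1) fH FG(3) nH incl by blast
  show ?thesis unfolding weakly_bialgebraic_def using rest ex by blast
qed


end
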